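(* Let $\Omega\subseteq\mathbb{R}^n$ ($n\ge1$) be bounded and measurable, $Y$ a Hilbert space, $S:L^2(\Omega)\to Y$ linear and continuous, $u_a,u_b\in L^\infty(\Omega)$ with $U_{\text{ad}}:=\{u\in L^2(\Omega):u_a\le u\le u_b\text{ a.e.}\}\ne\emptyset$, $z\in Y$, and let $(\alpha_k)_{k\ge1}$ be a uniformly bounded sequence of positive reals. Let $u^\dagger$ be a solution of the problem $\min_{u\in U_{\text{ad}}}\frac12\|Su-z\|_Y^2$ satisfying the Active Set Condition (see context) with constant $\kappa>0$. Fix $\tau>0$ and let $k(\delta)$ be the a priori stopping index defined in the context. For each $\delta>0$ let $z^\delta\in Y$ with $\|z-z^\delta\|_Y\le\delta$ and let $(u_k^\delta)_k$ be the Bregman iteration sequence for data $z^\delta$. Then $$\min_{j=1,\dots,k(\delta)}\|u^\dagger-u_j^\delta\|_{L^2(\Omega)}\to0\quad\text{as }\delta\to0.$$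
   Context: Active Set Condition: with $p^\dagger:=S^\ast(z-Su^\dagger)$, there exist a set $I\subseteq\Omega$, $w\in Y$ and positive constants $\kappa,c$ such that (1) $I\supseteq\{x\in\Omega:p^\dagger(x)=0\}$ and $\chi_I u^\dagger=\chi_I P_{U_{\text{ad}}}(S^\ast w)$, where $P_{U_{\text{ad}}}$ is the pointwise projection onto $[u_a,u_b]$; (2) with $A:=\Omega\setminus I$, for all $\varepsilon>0$: $|\{x\in A:0<|p^\dagger(x)|<\varepsilon\}|\le c\,\varepsilon^\kappa$; (3) $S^\ast w\in L^\infty(\Omega)$. Bregman iteration with data $\zeta$: $J(u)=\frac12\|u\|^2+I_{U_{\text{ad}}}(u)$ ($I_{U_{\text{ad}}}$ the indicator function), $D^\lambda(u,v)=J(u)-J(v)-(u-v,\lambda)_{L^2}$ for $\lambda\in\partial J(v)$; $u_0=P_{U_{\text{ad}}}(0)$, $\lambda_0=0$; for $k\ge1$, $u_k$ is the minimizer of $\frac12\|Su-\zeta\|_Y^2+\alpha_kD^{\lambda_{k-1}}(u,u_{k-1})$, and $\lambda_k:=S^\ast\sum_{i=1}^k\frac1{\alpha_i}(\zeta-Su_i)$. Stopping index: $\gamma_k:=\sum_{j=1}^k\frac1{\alpha_j}$, $\gamma_0:=0$, $e_k^n:=\delta^2\sum_{i=1}^k(\alpha_i^{-2}+\gamma_{i-1}^2)$, $e_k^r:=1+\sum_{i=1}^k\alpha_i^{-1}\gamma_i^{-\kappa}$; $k(\delta):=0$ if $e_1^n>\tau e_1^r$, otherwise $k(\delta):=\max\{k\in\mathbb{N}: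 e_i^n\le\tau e_i^r\ \forall i\le k\}$. (For $\delta$ small, $k(\delta)\ge1$, so the minimum is over a nonempty set.) *)

theory Defs
  imports "HOL-Analysis.Analysis"
begin

text \<open>Elements are representatives; all quantities below only depend on them a.e.\<close>

definition L2 :: "'a::euclidean_space set \<Rightarrow> ('a \<Rightarrow> real) set" where
  "L2 \<Omega> = {u. u \<in> borel_measurable (lebesgue_on \<Omega>) \<and>
              integrable (lebesgue_on \<Omega>) (\<lambda>x. (u x)\<^sup>2)}"

definition l2inner :: "'a::euclidean_space set \<Rightarrow> ('a \<Rightarrow> real) \<Rightarrow> ('a \<Rightarrow> real) \<Rightarrow> real" where
  "l2inner \<Omega> u v = (\<integral>x. u x * v x \<partial>(lebesgue_on \<Omega>))"

definition l2norm :: "'a::euclidean_space set \<Rightarrow> ('a \<Rightarrow> real) \<Rightarrow> real" where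
  "l2norm \<Omega> u = sqrt (l2inner \<Omega> u u)"

definition Linf :: "'a::euclidean_space set \<Rightarrow> ('a \<Rightarrow> real) set" where
  "Linf \<Omega> = {u. u \<in> borel_measurable (lebesgue_on \<Omega>) \<and>
              (\<exists>C. AE x in lebesgue_on \<Omega>. \<bar>u x\<bar> \<le> C)}"

definition Uad :: "'a::euclidean_space set \<Rightarrow> ('a \<Rightarrow> real) \<Rightarrow> ('a \<Rightarrow> real) \<Rightarrow> ('a \<Rightarrow> real) set" where
  "Uad \<Omega> ua ub = {u \<in> L2 \<Omega>. AE x in lebesgue_on \<Omega>. ua x \<le> u x \<and> u x \<le> ub x}"

definition projUad :: "('a \<Rightarrow> real) \<Rightarrow> ('a \<Rightarrow> real) \<Rightarrow> ('a \<Rightarrow> real) \<Rightarrow> ('a \<Rightarrow> real)" where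
  "projUad ua ub v = (\<lambda>x. max (ua x) (min (ub x) (v x)))"

definition active_set_condition ::
  "'a::euclidean_space set \<Rightarrow> (('a \<Rightarrow> real) \<Rightarrow> 'y::real_inner) \<Rightarrow> ('y \<Rightarrow> 'a \<Rightarrow> real)
   \<Rightarrow> ('a \<Rightarrow> real) \<Rightarrow> ('a \<Rightarrow> real) \<Rightarrow> 'y \<Rightarrow> ('a \<Rightarrow> real) \<Rightarrow> real \<Rightarrow> bool" where
  "active_set_condition \<Omega> S Sadj ua ub z udag \<kappa> \<longleftrightarrow>
     (let p = Sadj (z - S udag) in
      \<exists>I w c. I \<in> sets lebesgue \<and> I \<subseteq> \<Omega> \<and> c > 0 \<and>
        {x \<in> \<Omega>. p x = 0} \<subseteq> I \<and>
        (AE x in lebesgue_on \<Omega>. x \<in> I \<longrightarrow> udag x = projUad ua ub (Sadj w) x) \<and>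
        (\<forall>\<epsilon>>0. measure lebesgue {x \<in> \<Omega> - I. 0 < \<bar>p x\<bar> \<and> \<bar>p x\<bar> < \<epsilon>} \<le> c * \<epsilon> powr \<kappa>) \<and>
        Sadj w \<in> Linf \<Omega>)"

definition breg_lambda ::
  "(('a \<Rightarrow> real) \<Rightarrow> 'y::real_normed_vector) \<Rightarrow> ('y \<Rightarrow> 'a \<Rightarrow> real) \<Rightarrow> (nat \<Rightarrow> real)
   \<Rightarrow> 'y \<Rightarrow> (nat \<Rightarrow> 'a \<Rightarrow> real) \<Rightarrow> nat \<Rightarrow> ('a \<Rightarrow> real)" where
  "breg_lambda S Sadj \<alpha> \<zeta> u k =
     (if k = 0 then (\<lambda>_. 0) else Sadj (\<Sum>i=1..k. (1 / \<alpha> i) *\<^sub>R (\<zeta> - S (u i))))"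

text \<open>Objective of step k (k >= 1), restricted to U_ad where J is finite:
  1/2 |Sv - zeta|^2 + alpha_k D^{lambda_(k-1)}(v, u_(k-1)).\<close>
definition breg_obj ::
  "'a::euclidean_space set \<Rightarrow> (('a \<Rightarrow> real) \<Rightarrow> 'y::real_normed_vector) \<Rightarrow> ('y \<Rightarrow> 'a \<Rightarrow> real)
   \<Rightarrow> (nat \<Rightarrow> real) \<Rightarrow> 'y \<Rightarrow> (nat \<Rightarrow> 'a \<Rightarrow> real) \<Rightarrow> nat \<Rightarrow> ('a \<Rightarrow> real) \<Rightarrow> real" where
  "breg_obj \<Omega> S Sadj \<alpha> \<zeta> u k v =
     (1/2) * (norm (S v - \<zeta>))\<^sup>2 +
     \<alpha> k * ((1/2) * (l2norm \<Omega> v)\<^sup>2 - (1/2) * (l2norm \<Omega> (u (k - 1)))\<^sup>2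
             - l2inner \<Omega> (\<lambda>x. v x - u (k - 1) x) (breg_lambda S Sadj \<alpha> \<zeta> u (k - 1)))"

definition bregman_seq ::
  "'a::euclidean_space set \<Rightarrow> (('a \<Rightarrow> real) \<Rightarrow> 'y::real_normed_vector) \<Rightarrow> ('y \<Rightarrow> 'a \<Rightarrow> real)
   \<Rightarrow> ('a \<Rightarrow> real) \<Rightarrow> ('a \<Rightarrow> real) \<Rightarrow> (nat \<Rightarrow> real) \<Rightarrow> 'y \<Rightarrow> (nat \<Rightarrow> 'a \<Rightarrow> real) \<Rightarrow> bool" where
  "bregman_seq \<Omega> S Sadj ua ub \<alpha> \<zeta> u \<longleftrightarrow>
     u 0 = projUad ua ub (\<lambda>_. 0) \<and>
     (\<forall>k\<ge>1. u k \<in> Uad \<Omega> ua ub \<and>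
        (\<forall>v \<in> Uad \<Omega> ua ub. breg_obj \<Omega> S Sadj \<alpha> \<zeta> u k (u k) \<le> breg_obj \<Omega> S Sadj \<alpha> \<zeta> u k v))"

definition gam :: "(nat \<Rightarrow> real) \<Rightarrow> nat \<Rightarrow> real" where
  "gam \<alpha> k = (\<Sum>j=1..k. 1 / \<alpha> j)"

definition e_noise :: "(nat \<Rightarrow> real) \<Rightarrow> real \<Rightarrow> nat \<Rightarrow> real" where
  "e_noise \<alpha> \<delta> k = \<delta>\<^sup>2 * (\<Sum>i=1..k. 1 / (\<alpha> i)\<^sup>2 + (gam \<alpha> (i - 1))\<^sup>2)"

definition e_reg :: "(nat \<Rightarrow> real) \<Rightarrow> real \<Rightarrow> nat \<Rightarrow> real" where
  "e_reg \<alpha> \<kappa> k = 1 + (\<Sum>i=1..k. (1 / \<alpha> i) * gam \<alpha> i powr (-\<kappa>))"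

definition kstop :: "(nat \<Rightarrow> real) \<Rightarrow> real \<Rightarrow> real \<Rightarrow> real \<Rightarrow> nat" where
  "kstop \<alpha> \<kappa> \<tau> \<delta> =
     (if e_noise \<alpha> \<delta> 1 > \<tau> * e_reg \<alpha> \<kappa> 1 then 0
      else (GREATEST k. \<forall>i\<in>{1..k}. e_noise \<alpha> \<delta> i \<le> \<tau> * e_reg \<alpha> \<kappa> i))"

end

theory Submission imports Defs begin

locale sett =
  fixes \<Omega> :: "'a::euclidean_space set"
    and S :: "('a \<Rightarrow> real) \<Rightarrow> 'y::real_inner"
    and Sadj :: "'y \<Rightarrow> 'a \<Rightarrow> real"
  assumes \<Omega>_lm: "\<Omega> \<in> lmeasurable"
    and S_add: "\<And>u v. u \<in> L2 \<Omega> \<Longrightarrow> v \<in> L2 \<Omega> \<Longrightarrow> S (\<lambda>x. u x + v x) = S u + S v"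
    and S_scale: "\<And>c u. u \<in> L2 \<Omega> \<Longrightarrow> S (\<lambda>x. c * u x) = c *\<^sub>R S u"
    and Sadj_L2: "\<And>w. Sadj w \<in> L2 \<Omega>"
    and Sadj_adj: "\<And>w u. u \<in> L2 \<Omega> \<Longrightarrow> l2inner \<Omega> u (Sadj w) = inner (S u) w"
begin

abbreviation "M \<equiv> lebesgue_on \<Omega>"

lemma finM: "finite_measure M"
  using \<Omega>_lm by (rule finite_measure_lebesgue_on)

lemma L2_meas: "u \<in> L2 \<Omega> \<Longrightarrow> u \<in> borel_measurable M"
  by (simp add: L2_def)

lemma L2_sq: "u \<in> L2 \<Omega> \<Longrightarrow> integrable M (\<lambda>x. (u x)\<^sup>2)"
  by (simp add: L2_def)

lemma L2_prod:
  assumes "u \<in> L2 \<Omega>" "v \<in> L2 \<Omega>" shows "integrable M (\<lambda>x. u x * v x)"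
proof (rule Bochner_Integration.integrable_bound)
  show "integrable M (\<lambda>x. (u x)\<^sup>2 + (v x)\<^sup>2)"
    using assms by (intro Bochner_Integration.integrable_add L2_sq)
  show "(\<lambda>x. u x * v x) \<in> borel_measurable M" using assms L2_meas by measurable
  show "AE x in M. norm (u x * v x) \<le> norm ((u x)\<^sup>2 + (v x)\<^sup>2)"
  proof (intro AE_I2)
    fix x
    have "0 \<le> (\<bar>u x\<bar> - \<bar>v x\<bar>)\<^sup>2" by simp
    then have "2 * (\<bar>u x\<bar> * \<bar>v x\<bar>) \<le> (u x)\<^sup>2 + (v x)\<^sup>2"
      by (simp add: power2_diff)
    moreover have "0 \<le> \<bar>u x\<bar> * \<bar>v x\<bar>" by simp
    ultimately have "\<bar>u x\<bar> * \<bar>v x\<bar> \<le> (u x)\<^sup>2 + (v x)\<^sup>2" by linarith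
    then have "\<bar>u x * v x\<bar> \<le> (u x)\<^sup>2 + (v x)\<^sup>2" by (simp add: abs_mult)
    then show "norm (u x * v x) \<le> norm ((u x)\<^sup>2 + (v x)\<^sup>2)" by simp
  qed
qed

lemma L2I: "u \<in> borel_measurable M \<Longrightarrow> integrable M (\<lambda>x. (u x)\<^sup>2) \<Longrightarrow> u \<in> L2 \<Omega>"
  by (simp add: L2_def)

lemma L2_add: assumes "u \<in> L2 \<Omega>" "v \<in> L2 \<Omega>" shows "(\<lambda>x. u x + v x) \<in> L2 \<Omega>"
proof (rule L2I)
  have [measurable]: "u \<in> borel_measurable M" "v \<in> borel_measurable M" using assms L2_meas by auto
  show "(\<lambda>x. u x + v x) \<in> borel_measurable M" by measurable
  show "integrable M (\<lambda>x. (u x + v x)\<^sup>2)"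
    unfolding power2_sum mult.assoc using assms
    by (intro Bochner_Integration.integrable_add L2_sq integrable_mult_right L2_prod)
qed

lemma L2_scale: assumes "u \<in> L2 \<Omega>" shows "(\<lambda>x. c * u x) \<in> L2 \<Omega>"
proof (rule L2I)
  have [measurable]: "u \<in> borel_measurable M" using assms L2_meas by auto
  show "(\<lambda>x. c * u x) \<in> borel_measurable M" by measurable
  show "integrable M (\<lambda>x. (c * u x)\<^sup>2)"
    unfolding power_mult_distrib using assms
    by (intro integrable_mult_right L2_sq)
qed

lemma L2_diff: "u \<in> L2 \<Omega> \<Longrightarrow> v \<in> L2 \<Omega> \<Longrightarrow> (\<lambda>x. u x - v x) \<in> L2 \<Omega>"
  using L2_add[of u "\<lambda>x. (-1) * v x"] L2_scale[of v "-1"] by (simp del: mult_minus_left)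

lemma L2_comb: "u \<in> L2 \<Omega> \<Longrightarrow> v \<in> L2 \<Omega> \<Longrightarrow> (\<lambda>x. u x + t * v x) \<in> L2 \<Omega>"
  using L2_add L2_scale by blast

lemma L2_zero: "(\<lambda>x. 0) \<in> L2 \<Omega>"
  by (rule L2I) auto

lemma L2_bdd:
  assumes "u \<in> borel_measurable M" "AE x in M. \<bar>u x\<bar> \<le> C" shows "u \<in> L2 \<Omega>"
proof (rule L2I[OF assms(1)])
  show "integrable M (\<lambda>x. (u x)\<^sup>2)"
  proof (rule finite_measure.integrable_const_bound[OF finM, where B="C\<^sup>2"])
    show "AE x in M. norm ((u x)\<^sup>2) \<le> C\<^sup>2" using assms(2)
      by eventually_elim (metis abs_le_square_iff abs_ge_self order_trans real_norm_def abs_power2)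
  qed (use assms in measurable)
qed

lemma S_diff: "u \<in> L2 \<Omega> \<Longrightarrow> v \<in> L2 \<Omega> \<Longrightarrow> S (\<lambda>x. u x - v x) = S u - S v"
proof -
  assume a: "u \<in> L2 \<Omega>" "v \<in> L2 \<Omega>"
  have "S (\<lambda>x. u x - v x) = S (\<lambda>x. u x + (-1) * v x)" by simp
  also have "\<dots> = S u + S (\<lambda>x. (-1) * v x)" using a L2_scale[of v "-1"] by (intro S_add) (auto simp del: mult_minus_left)
  also have "\<dots> = S u - S v" using a S_scale[of v "-1"] by (simp del: mult_minus_left)
  finally show ?thesis .
qed

lemma S_comb: "u \<in> L2 \<Omega> \<Longrightarrow> v \<in> L2 \<Omega> \<Longrightarrow> S (\<lambda>x. u x + t * v x) = S u + t *\<^sub>R S v"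
  using S_add L2_scale S_scale by simp

lemma l2inner_nonneg: "0 \<le> l2inner \<Omega> u u"
  unfolding l2inner_def by (rule Bochner_Integration.integral_nonneg) simp

lemma l2norm_sq: "(l2norm \<Omega> u)\<^sup>2 = l2inner \<Omega> u u"
  unfolding l2norm_def using l2inner_nonneg by simp

lemma l2inner_comb_sq:
  assumes "u \<in> L2 \<Omega>" "h \<in> L2 \<Omega>"
  shows "l2inner \<Omega> (\<lambda>x. u x + t * h x) (\<lambda>x. u x + t * h x)
     = l2inner \<Omega> u u + 2 * t * l2inner \<Omega> u h + t\<^sup>2 * l2inner \<Omega> h h"
proof -
  have "(\<lambda>x. (u x + t * h x) * (u x + t * h x)) = (\<lambda>x. u x * u x + ((2 * t) * (u x * h x) + t\<^sup>2 * (h x * h x)))"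
    by (auto simp: algebra_simps power2_eq_square)
  then show ?thesis unfolding l2inner_def
    using assms by (simp add: L2_prod)
qed

end

definition Lam :: "(('a \<Rightarrow> real) \<Rightarrow> 'y::real_normed_vector) \<Rightarrow> (nat \<Rightarrow> real) \<Rightarrow> 'y \<Rightarrow> (nat \<Rightarrow> 'a \<Rightarrow> real) \<Rightarrow> nat \<Rightarrow> 'y" where
  "Lam S \<alpha> \<zeta> u k = (\<Sum>i=1..k. (1 / \<alpha> i) *\<^sub>R (\<zeta> - S (u i)))"

lemma Lam_Suc: "Lam S \<alpha> \<zeta> u (Suc k) = Lam S \<alpha> \<zeta> u k + (1 / \<alpha> (Suc k)) *\<^sub>R (\<zeta> - S (u (Suc k)))"
  unfolding Lam_def by simp

lemma quad_nonneg:
  fixes A B :: real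
  assumes h: "\<And>t. 0 < t \<Longrightarrow> t \<le> 1 \<Longrightarrow> 0 \<le> t * A + t\<^sup>2 * B" and B: "0 \<le> B"
  shows "0 \<le> A"
proof (rule ccontr)
  assume "\<not> 0 \<le> A"
  hence A: "A < 0" by simp
  define t where "t = min 1 (- A / (2 * (B + 1)))"
  have "- A / (2 * (B + 1)) > 0" using A B by (intro divide_pos_pos) auto
  then have t0: "0 < t" "t \<le> 1" by (auto simp: t_def)
  have "t \<le> - A / (2 * (B + 1))" by (simp add: t_def)
  moreover have c: "0 < 2 * (B + 1)" using B by simp
  ultimately have "t * (2 * (B + 1)) \<le> - A" using pos_le_divide_eq[OF c] by blast
  moreover have "t * (2 * (B + 1)) = 2 * (t * B) + 2 * t" by (simp add: algebra_simps)
  ultimately have tB: "t * B \<le> - A / 2" using t0 by linarith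
  have "t * A + t\<^sup>2 * B = t * (A + t * B)" by (simp add: power2_eq_square algebra_simps)
  also have "\<dots> < 0" using t0 tB A by (intro mult_pos_neg) auto
  finally show False using h[OF t0] by simp
qed

lemma norm_comb_sq:
  fixes a b :: "'y::real_inner"
  shows "(norm (a + t *\<^sub>R b))\<^sup>2 = (norm a)\<^sup>2 + 2 * t * inner a b + t\<^sup>2 * (norm b)\<^sup>2"
  unfolding power2_norm_eq_inner
  by (simp add: inner_add_left inner_add_right inner_commute power2_eq_square algebra_simps)

context sett
begin

lemma l2inner_zero2: "l2inner \<Omega> f (\<lambda>x. 0) = 0"
  by (simp add: l2inner_def)

lemma l2inner_lin1:
  assumes "a \<in> L2 \<Omega>" "b \<in> L2 \<Omega>" "l \<in> L2 \<Omega>"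
  shows "l2inner \<Omega> (\<lambda>x. a x + t * b x) l = l2inner \<Omega> a l + t * l2inner \<Omega> b l"
proof -
  have "(\<lambda>x. (a x + t * b x) * l x) = (\<lambda>x. a x * l x + t * (b x * l x))"
    by (auto simp: algebra_simps)
  then show ?thesis unfolding l2inner_def using assms by (simp add: L2_prod)
qed

lemma l2inner_diff1:
  assumes "a \<in> L2 \<Omega>" "b \<in> L2 \<Omega>" "l \<in> L2 \<Omega>"
  shows "l2inner \<Omega> (\<lambda>x. a x - b x) l = l2inner \<Omega> a l - l2inner \<Omega> b l"
  using l2inner_lin1[OF assms, of "-1"] by simp

lemma l2inner_sym: "l2inner \<Omega> a b = l2inner \<Omega> b a"
  unfolding l2inner_def by (simp add: mult.commute)

lemma breg_lambda_L2: "breg_lambda S Sadj \<alpha> \<zeta> u k \<in> L2 \<Omega>"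
  by (simp add: breg_lambda_def L2_zero Sadj_L2)

lemma breg_lambda_inner:
  assumes "x \<in> L2 \<Omega>"
  shows "l2inner \<Omega> x (breg_lambda S Sadj \<alpha> \<zeta> u k) = inner (S x) (Lam S \<alpha> \<zeta> u k)"
  using assms by (simp add: breg_lambda_def Lam_def l2inner_zero2 Sadj_adj)

lemma Uad_L2: "u \<in> Uad \<Omega> ua ub \<Longrightarrow> u \<in> L2 \<Omega>"
  by (simp add: Uad_def)

lemma Uad_comb:
  assumes u: "u \<in> Uad \<Omega> ua ub" and v: "v \<in> Uad \<Omega> ua ub" and t: "0 \<le> t" "t \<le> 1"
  shows "(\<lambda>x. u x + t * (v x - u x)) \<in> Uad \<Omega> ua ub"
proof -
  have L: "(\<lambda>x. u x + t * (v x - u x)) \<in> L2 \<Omega>"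
    using u v L2_comb[of u "\<lambda>x. v x - u x"] L2_diff Uad_L2 by blast
  have "AE x in M. ua x \<le> u x \<and> u x \<le> ub x" "AE x in M. ua x \<le> v x \<and> v x \<le> ub x"
    using u v by (auto simp: Uad_def)
  then have "AE x in M. ua x \<le> u x + t * (v x - u x) \<and> u x + t * (v x - u x) \<le> ub x"
  proof eventually_elim
    case (elim x)
    have e1: "u x + t * (v x - u x) - ua x = (1 - t) * (u x - ua x) + t * (v x - ua x)"
      by (simp add: algebra_simps)
    have e2: "ub x - (u x + t * (v x - u x)) = (1 - t) * (ub x - u x) + t * (ub x - v x)"
      by (simp add: algebra_simps)
    have "0 \<le> (1 - t) * (u x - ua x) + t * (v x - ua x)" using elim t by simp
    moreover have "0 \<le> (1 - t) * (ub x - u x) + t * (ub x - v x)" using elim t by simp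
    ultimately show ?case using e1 e2 by linarith
  qed
  then show ?thesis using L by (simp add: Uad_def)
qed

lemma breg_vi:
  assumes k1: "k \<ge> 1" and apos: "\<alpha> k > 0"
    and uk: "u k \<in> Uad \<Omega> ua ub"
    and mini: "\<forall>v\<in>Uad \<Omega> ua ub. breg_obj \<Omega> S Sadj \<alpha> \<zeta> u k (u k) \<le> breg_obj \<Omega> S Sadj \<alpha> \<zeta> u k v"
    and prev: "k \<ge> 2 \<Longrightarrow> u (k - 1) \<in> L2 \<Omega>"
    and v: "v \<in> Uad \<Omega> ua ub"
  shows "inner (S (\<lambda>x. v x - u k x)) (Lam S \<alpha> \<zeta> u k) \<le> l2inner \<Omega> (u k) (\<lambda>x. v x - u k x)"
proof -
  define h where "h = (\<lambda>x. v x - u k x)"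
  define lam where "lam = breg_lambda S Sadj \<alpha> \<zeta> u (k - 1)"
  have ukL: "u k \<in> L2 \<Omega>" using uk Uad_L2 by auto
  have hL: "h \<in> L2 \<Omega>" unfolding h_def using ukL v Uad_L2 L2_diff by blast
  have lamL: "lam \<in> L2 \<Omega>" unfolding lam_def by (rule breg_lambda_L2)
  define a1 where "a1 = inner (S (u k) - \<zeta>) (S h)"
  define ip where "ip = l2inner \<Omega> (u k) h"
  define lh where "lh = l2inner \<Omega> h lam"
  define A where "A = a1 + \<alpha> k * (ip - lh)"
  define B where "B = (1/2) * (norm (S h))\<^sup>2 + \<alpha> k * ((1/2) * l2inner \<Omega> h h)"
  have lin: "l2inner \<Omega> (\<lambda>x. u k x + t * h x - u (k - 1) x) lam
        = l2inner \<Omega> (\<lambda>x. u k x - u (k - 1) x) lam + t * lh" for t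
  proof (cases "k = 1")
    case True
    then show ?thesis by (simp add: lam_def lh_def breg_lambda_def l2inner_zero2)
  next
    case False
    then have pL: "u (k - 1) \<in> L2 \<Omega>" using prev k1 by auto
    have "(\<lambda>x. u k x + t * h x - u (k - 1) x) = (\<lambda>x. (u k x - u (k - 1) x) + t * h x)"
      by (auto simp: algebra_simps)
    then show ?thesis unfolding lh_def
      using l2inner_lin1[of "\<lambda>x. u k x - u (k - 1) x" h lam t] ukL pL hL lamL L2_diff by simp
  qed
  have key: "0 \<le> t * A + t\<^sup>2 * B" if t: "0 < t" "t \<le> 1" for t
  proof -
    define wt where "wt = (\<lambda>x. u k x + t * h x)"
    have "wt \<in> Uad \<Omega> ua ub" unfolding wt_def h_def using Uad_comb[OF uk v] t by simp
    then have le: "breg_obj \<Omega> S Sadj \<alpha> \<zeta> u k (u k) \<le> breg_obj \<Omega> S Sadj \<alpha> \<zeta> u k wt"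
      using mini by auto
    have Swt: "S wt - \<zeta> = (S (u k) - \<zeta>) + t *\<^sub>R S h"
      unfolding wt_def using S_comb[OF ukL hL] by simp
    have n1: "(norm (S wt - \<zeta>))\<^sup>2 = (norm (S (u k) - \<zeta>))\<^sup>2 + 2 * t * a1 + t\<^sup>2 * (norm (S h))\<^sup>2"
      unfolding Swt a1_def by (rule norm_comb_sq)
    have n2: "(l2norm \<Omega> wt)\<^sup>2 = (l2norm \<Omega> (u k))\<^sup>2 + 2 * t * ip + t\<^sup>2 * l2inner \<Omega> h h"
      unfolding l2norm_sq wt_def ip_def using l2inner_comb_sq[OF ukL hL] by simp
    have n3: "l2inner \<Omega> (\<lambda>x. wt x - u (k - 1) x) lam
        = l2inner \<Omega> (\<lambda>x. u k x - u (k - 1) x) lam + t * lh"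
      unfolding wt_def using lin by simp
    have e1: "breg_obj \<Omega> S Sadj \<alpha> \<zeta> u k wt = (1/2) * (norm (S wt - \<zeta>))\<^sup>2 + \<alpha> k * ((1/2) * (l2norm \<Omega> wt)\<^sup>2
        - (1/2) * (l2norm \<Omega> (u (k - 1)))\<^sup>2 - l2inner \<Omega> (\<lambda>x. wt x - u (k - 1) x) lam)"
      unfolding breg_obj_def lam_def ..
    have e0: "breg_obj \<Omega> S Sadj \<alpha> \<zeta> u k (u k) = (1/2) * (norm (S (u k) - \<zeta>))\<^sup>2 + \<alpha> k * ((1/2) * (l2norm \<Omega> (u k))\<^sup>2
        - (1/2) * (l2norm \<Omega> (u (k - 1)))\<^sup>2 - l2inner \<Omega> (\<lambda>x. u k x - u (k - 1) x) lam)"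
      unfolding breg_obj_def lam_def ..
    have gen: "(1/2) * (N + 2 * t * a1 + t\<^sup>2 * (norm (S h))\<^sup>2) + \<alpha> k * ((1/2) * (L + 2 * t * ip + t\<^sup>2 * l2inner \<Omega> h h)
        - (1/2) * Lp - (I + t * lh))
       = ((1/2) * N + \<alpha> k * ((1/2) * L - (1/2) * Lp - I)) + (t * A + t\<^sup>2 * B)" for N L Lp I
      unfolding A_def B_def by (simp add: algebra_simps)
    have "breg_obj \<Omega> S Sadj \<alpha> \<zeta> u k wt = breg_obj \<Omega> S Sadj \<alpha> \<zeta> u k (u k) + (t * A + t\<^sup>2 * B)"
      unfolding e1 e0 n1 n2 n3 by (rule gen)
    then show ?thesis using le by simp
  qed
  have "0 \<le> B" unfolding B_def using apos l2inner_nonneg by simp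
  with key have A0: "0 \<le> A" by (rule quad_nonneg)
  obtain m where km: "k = Suc m" using k1 by (cases k) auto
  have lhL: "lh = inner (S h) (Lam S \<alpha> \<zeta> u (k - 1))"
    unfolding lh_def lam_def by (rule breg_lambda_inner[OF hL])
  have LamK: "inner (S h) (Lam S \<alpha> \<zeta> u k) = lh - a1 / \<alpha> k"
    unfolding lhL a1_def km Lam_Suc by (simp add: inner_add_right inner_diff_right inner_commute diff_divide_distrib)
  have "a1 = \<alpha> k * (lh - inner (S h) (Lam S \<alpha> \<zeta> u k))" using LamK apos by simp
  then have "0 \<le> \<alpha> k * (ip - inner (S h) (Lam S \<alpha> \<zeta> u k))" using A0 unfolding A_def
    by (simp add: algebra_simps)
  then have "inner (S h) (Lam S \<alpha> \<zeta> u k) \<le> ip" using apos by (simp add: zero_le_mult_iff)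
  then show ?thesis unfolding h_def ip_def by simp
qed

lemma opt_vi:
  assumes uz: "uz \<in> Uad \<Omega> ua ub"
    and mini: "\<And>v. v \<in> Uad \<Omega> ua ub \<Longrightarrow> (1/2) * (norm (S uz - z))\<^sup>2 \<le> (1/2) * (norm (S v - z))\<^sup>2"
    and v: "v \<in> Uad \<Omega> ua ub"
  shows "inner (S (\<lambda>x. v x - uz x)) (z - S uz) \<le> 0"
proof -
  define h where "h = (\<lambda>x. v x - uz x)"
  have uzL: "uz \<in> L2 \<Omega>" using uz Uad_L2 by auto
  have hL: "h \<in> L2 \<Omega>" unfolding h_def using uzL v Uad_L2 L2_diff by blast
  define A where "A = inner (S uz - z) (S h)"
  define B where "B = (1/2) * (norm (S h))\<^sup>2"
  have key: "0 \<le> t * A + t\<^sup>2 * B" if t: "0 < t" "t \<le> 1" for t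
  proof -
    define wt where "wt = (\<lambda>x. uz x + t * h x)"
    have "wt \<in> Uad \<Omega> ua ub" unfolding wt_def h_def using Uad_comb[OF uz v] t by simp
    then have le: "(1/2) * (norm (S uz - z))\<^sup>2 \<le> (1/2) * (norm (S wt - z))\<^sup>2" using mini by auto
    have Swt: "S wt - z = (S uz - z) + t *\<^sub>R S h"
      unfolding wt_def using S_comb[OF uzL hL] by simp
    have "(norm (S wt - z))\<^sup>2 = (norm (S uz - z))\<^sup>2 + 2 * t * A + t\<^sup>2 * (norm (S h))\<^sup>2"
      unfolding Swt A_def by (rule norm_comb_sq)
    then show ?thesis using le unfolding B_def by (simp add: algebra_simps)
  qed
  have "0 \<le> B" unfolding B_def by simp
  with key have "0 \<le> A" by (rule quad_nonneg)
  then show ?thesis unfolding A_def h_def by (simp add: inner_diff_left inner_diff_right inner_commute)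
qed

end

lemma proj_prop:
  fixes a b u uz s :: real
  assumes "a \<le> u" "u \<le> b" "a \<le> uz" "uz \<le> b" "uz = max a (min b s)"
  shows "0 \<le> (u - uz) * (uz - s)"
proof (cases "b \<le> s")
  case True
  then have "uz = b" using assms by auto
  then show ?thesis using assms True by (intro mult_nonpos_nonpos) auto
next
  case False
  show ?thesis
  proof (cases "s \<le> a")
    case True
    then have "uz = a" using assms False by auto
    then show ?thesis using assms True by (intro mult_nonneg_nonneg) auto
  next
    case F2: False
    then have "uz = s" using assms False by auto
    then show ?thesis by simp
  qed
qed

lemma pw_bound:
  fixes e p g gm G Mb ind :: real
  assumes sgn: "p * e \<le> 0" and eb: "\<bar>e\<bar> \<le> Mb" and gb: "\<bar>g\<bar> \<le> G" and gm: "gm > 0"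
    and G: "G > 0"
    and ind: "\<bar>p\<bar> < G / gm \<Longrightarrow> ind = 1" and ind0: "0 \<le> ind"
  shows "gm * (e * p) - e * g \<le> G * Mb * ind"
proof -
  have eg: "- (e * g) \<le> \<bar>e\<bar> * \<bar>g\<bar>" by (simp add: abs_mult[symmetric])
  have "\<bar>e * p\<bar> = - (e * p)" using sgn by (simp add: mult.commute)
  then have ep: "e * p = - (\<bar>e\<bar> * \<bar>p\<bar>)" by (simp add: abs_mult)
  have Mb0: "0 \<le> Mb" using eb by simp
  show ?thesis
  proof (cases "\<bar>p\<bar> < G / gm")
    case True
    have "\<bar>e\<bar> * \<bar>g\<bar> \<le> Mb * G" using eb gb by (intro mult_mono) auto
    moreover have "gm * (e * p) \<le> 0" using ep gm by (simp add: mult_nonneg_nonneg)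
    ultimately show ?thesis using ind[OF True] eg by (simp add: algebra_simps)
  next
    case False
    then have "G \<le> gm * \<bar>p\<bar>" using gm by (simp add: not_less pos_divide_le_eq mult.commute)
    then have "\<bar>e\<bar> * G \<le> \<bar>e\<bar> * (gm * \<bar>p\<bar>)" by (intro mult_left_mono) auto
    moreover have "\<bar>e\<bar> * \<bar>g\<bar> \<le> \<bar>e\<bar> * G" using gb by (intro mult_left_mono) auto
    moreover have "0 \<le> G * Mb * ind" using G Mb0 ind0 by simp
    ultimately show ?thesis using ep eg by (simp add: algebra_simps)
  qed
qed

context sett
begin

lemma L2_Linf: "f \<in> Linf \<Omega> \<Longrightarrow> f \<in> L2 \<Omega>"
  unfolding Linf_def using L2_bdd by blast

lemma AE_zero_of_nonpos:
  fixes f :: "'a \<Rightarrow> real"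
  assumes "integrable M f" "\<And>x. 0 \<le> f x" "integral\<^sup>L M f \<le> 0"
  shows "AE x in M. f x = 0"
proof -
  have "0 \<le> integral\<^sup>L M f" by (rule Bochner_Integration.integral_nonneg) (use assms in auto)
  then have "integral\<^sup>L M f = 0" using assms by linarith
  then show ?thesis using integral_nonneg_eq_0_iff_AE[of M f] assms by auto
qed

lemma Uad_if:
  assumes uz: "uz \<in> Uad \<Omega> ua ub" and b: "b \<in> L2 \<Omega>"
    and br: "AE x in M. ua x \<le> b x \<and> b x \<le> ub x"
    and Q[measurable]: "Measurable.pred M Q"
  shows "(\<lambda>x. if Q x then b x else uz x) \<in> Uad \<Omega> ua ub"
proof -
  have uzL: "uz \<in> L2 \<Omega>" using uz by (simp add: Uad_def)
  have [measurable]: "uz \<in> borel_measurable M" "b \<in> borel_measurable M" using uzL b L2_meas by auto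
  have L: "(\<lambda>x. if Q x then b x else uz x) \<in> L2 \<Omega>"
  proof (rule L2I)
    show "(\<lambda>x. if Q x then b x else uz x) \<in> borel_measurable M" by measurable
    show "integrable M (\<lambda>x. (if Q x then b x else uz x)\<^sup>2)"
    proof (rule Bochner_Integration.integrable_bound)
      show "integrable M (\<lambda>x. (b x)\<^sup>2 + (uz x)\<^sup>2)"
        using b uzL by (intro Bochner_Integration.integrable_add L2_sq)
      show "(\<lambda>x. (if Q x then b x else uz x)\<^sup>2) \<in> borel_measurable M" by measurable
      show "AE x in M. norm ((if Q x then b x else uz x)\<^sup>2) \<le> norm ((b x)\<^sup>2 + (uz x)\<^sup>2)"
        by (intro AE_I2) auto
    qed
  qed
  have "AE x in M. ua x \<le> uz x \<and> uz x \<le> ub x" using uz by (simp add: Uad_def)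
  with br have "AE x in M. ua x \<le> (if Q x then b x else uz x) \<and> (if Q x then b x else uz x) \<le> ub x"
    by eventually_elim auto
  with L show ?thesis by (simp add: Uad_def)
qed

lemma sign_pw:
  assumes uz: "uz \<in> Uad \<Omega> ua ub"
    and opt: "\<And>v. v \<in> Uad \<Omega> ua ub \<Longrightarrow> inner (S (\<lambda>x. v x - uz x)) P \<le> 0"
    and ua: "ua \<in> Linf \<Omega>" and ub: "ub \<in> Linf \<Omega>"
    and u: "u \<in> Uad \<Omega> ua ub"
  shows "AE x in M. Sadj P x * (u x - uz x) \<le> 0"
proof -
  define p where "p = Sadj P"
  have pL: "p \<in> L2 \<Omega>" unfolding p_def by (rule Sadj_L2)
  have uzL: "uz \<in> L2 \<Omega>" using uz by (simp add: Uad_def)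
  have uaL: "ua \<in> L2 \<Omega>" and ubL: "ub \<in> L2 \<Omega>" using ua ub L2_Linf by auto
  have [measurable]: "p \<in> borel_measurable M" "uz \<in> borel_measurable M"
    "ua \<in> borel_measurable M" "ub \<in> borel_measurable M"
    using pL uzL uaL ubL L2_meas by auto
  have r0: "AE x in M. ua x \<le> uz x \<and> uz x \<le> ub x" using uz by (simp add: Uad_def)
  have gen: "AE x in M. \<not> Q x"
    if b: "b \<in> L2 \<Omega>" "AE x in M. ua x \<le> b x \<and> b x \<le> ub x" and Q: "Measurable.pred M Q"
      and pos: "\<And>x. Q x \<Longrightarrow> 0 < (b x - uz x) * p x" for b Q
  proof -
    define v where "v = (\<lambda>x. if Q x then b x else uz x)"
    have v: "v \<in> Uad \<Omega> ua ub" unfolding v_def by (rule Uad_if[OF uz b Q])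
    have vL: "v \<in> L2 \<Omega>" using v by (simp add: Uad_def)
    have "l2inner \<Omega> (\<lambda>x. v x - uz x) p = inner (S (\<lambda>x. v x - uz x)) P"
      unfolding p_def using vL uzL L2_diff by (intro Sadj_adj) auto
    also have "\<dots> \<le> 0" using opt[OF v] .
    finally have i0: "integral\<^sup>L M (\<lambda>x. (v x - uz x) * p x) \<le> 0" by (simp add: l2inner_def)
    have "AE x in M. (v x - uz x) * p x = 0"
    proof (rule AE_zero_of_nonpos[OF _ _ i0])
      show "integrable M (\<lambda>x. (v x - uz x) * p x)" using vL uzL pL L2_diff L2_prod by blast
      show "0 \<le> (v x - uz x) * p x" for x
        using pos[of x] unfolding v_def by (cases "Q x") auto
    qed
    then show ?thesis
      by eventually_elim (use pos in \<open>fastforce simp: v_def\<close>)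
  qed
  have A1: "AE x in M. \<not> (0 < p x \<and> uz x < ub x)"
  proof (rule gen[OF ubL])
    show "AE x in M. ua x \<le> ub x \<and> ub x \<le> ub x" using r0 by eventually_elim auto
    show "Measurable.pred M (\<lambda>x. 0 < p x \<and> uz x < ub x)" by measurable
    show "0 < (ub x - uz x) * p x" if "0 < p x \<and> uz x < ub x" for x
      using that by (simp add: mult_pos_pos)
  qed
  have A2: "AE x in M. \<not> (p x < 0 \<and> ua x < uz x)"
  proof (rule gen[OF uaL])
    show "AE x in M. ua x \<le> ua x \<and> ua x \<le> ub x" using r0 by eventually_elim auto
    show "Measurable.pred M (\<lambda>x. p x < 0 \<and> ua x < uz x)" by measurable
    show "0 < (ua x - uz x) * p x" if "p x < 0 \<and> ua x < uz x" for x
      using that by (simp add: mult_neg_neg)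
  qed
  have ru: "AE x in M. ua x \<le> u x \<and> u x \<le> ub x" using u by (simp add: Uad_def)
  from A1 A2 r0 ru show ?thesis
  proof eventually_elim
    case (elim x)
    show ?case
    proof (cases "0 < p x")
      case True
      then have "u x - uz x \<le> 0" using elim by auto
      then show ?thesis using True unfolding p_def[symmetric] by (simp add: mult_nonneg_nonpos)
    next
      case False
      show ?thesis
      proof (cases "p x < 0")
        case True
        then have "0 \<le> u x - uz x" using elim by auto
        then show ?thesis using True unfolding p_def[symmetric] by (simp add: mult_nonpos_nonneg)
      next
        case F2: False
        then have "p x = 0" using False by simp
        then show ?thesis unfolding p_def[symmetric] by simp
      qed
    qed
  qed
qed

end


context sett
begin

lemma Omega_sets: "\<Omega> \<in> sets lebesgue"
  using \<Omega>_lm by (simp add: fmeasurable_def)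

lemma spaceM: "space M = \<Omega>"
  by (simp add: space_restrict_space)

lemma step_int_bound:
  assumes uzL: "uz \<in> L2 \<Omega>" and uL: "u \<in> L2 \<Omega>"
    and sgn: "AE x in M. Sadj P x * (u x - uz x) \<le> 0"
    and Ilm: "I \<in> sets lebesgue" and pz: "{x\<in>\<Omega>. Sadj P x = 0} \<subseteq> I"
    and proj: "AE x in M. x \<in> I \<longrightarrow> uz x = projUad ua ub (Sadj w) x"
    and meas: "\<forall>\<epsilon>>0. measure lebesgue {x \<in> \<Omega> - I. 0 < \<bar>Sadj P x\<bar> \<and> \<bar>Sadj P x\<bar> < \<epsilon>} \<le> c * \<epsilon> powr \<kappa>"
    and rng: "AE x in M. ua x \<le> u x \<and> u x \<le> ub x \<and> ua x \<le> uz x \<and> uz x \<le> ub x"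
    and eb: "AE x in M. \<bar>u x - uz x\<bar> \<le> Mb" and gb: "AE x in M. \<bar>uz x - Sadj w x\<bar> \<le> G"
    and G: "G > 0" and Mb: "Mb \<ge> 0" and gm: "gm > 0"
  shows "gm * l2inner \<Omega> (\<lambda>x. u x - uz x) (Sadj P)
          - l2inner \<Omega> (\<lambda>x. u x - uz x) (\<lambda>x. uz x - Sadj w x)
         \<le> G * Mb * (c * G powr \<kappa>) * gm powr (-\<kappa>)"
proof -
  define p where "p = Sadj P"
  define s where "s = Sadj w"
  have pL: "p \<in> L2 \<Omega>" and sL: "s \<in> L2 \<Omega>" unfolding p_def s_def by (rule Sadj_L2)+
  have eL: "(\<lambda>x. u x - uz x) \<in> L2 \<Omega>" using uL uzL L2_diff by blast
  have gL: "(\<lambda>x. uz x - s x) \<in> L2 \<Omega>" using sL uzL L2_diff by blast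
  have [measurable]: "p \<in> borel_measurable M" using pL L2_meas by auto
  define B where "B = {x \<in> \<Omega> - I. 0 < \<bar>p x\<bar> \<and> \<bar>p x\<bar> < G / gm}"
  have BO: "B \<subseteq> \<Omega>" unfolding B_def by auto
  have IO: "I \<inter> \<Omega> \<in> sets M"
    using sets_restrict_space_iff[of \<Omega> lebesgue "I \<inter> \<Omega>"] Ilm Omega_sets by auto
  have "{x \<in> space M. 0 < \<bar>p x\<bar> \<and> \<bar>p x\<bar> < G / gm} \<in> sets M" by measurable
  then have "{x \<in> space M. 0 < \<bar>p x\<bar> \<and> \<bar>p x\<bar> < G / gm} - (I \<inter> \<Omega>) \<in> sets M"
    using IO by auto
  moreover have "{x \<in> space M. 0 < \<bar>p x\<bar> \<and> \<bar>p x\<bar> < G / gm} - (I \<inter> \<Omega>) = B"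
    unfolding B_def spaceM by auto
  ultimately have BM: "B \<in> sets M" by simp
  have intB: "integrable M (\<lambda>x. G * Mb * indicator B x)"
  proof (rule finite_measure.integrable_const_bound[OF finM, where B="G * Mb"])
    show "AE x in M. norm (G * Mb * indicator B x) \<le> G * Mb"
      using G Mb by (intro AE_I2) (auto simp: indicator_def)
    show "(\<lambda>x. G * Mb * indicator B x) \<in> borel_measurable M" using BM by measurable
  qed
  have inth: "integrable M (\<lambda>x. gm * ((u x - uz x) * p x) - (u x - uz x) * (uz x - s x))"
    using eL pL gL by (intro Bochner_Integration.integrable_diff integrable_mult_right L2_prod)
  have pw: "AE x in M. gm * ((u x - uz x) * p x) - (u x - uz x) * (uz x - s x) \<le> G * Mb * indicator B x"
    using AE_space sgn proj rng eb gb
  proof eventually_elim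
    case (elim x)
    have xO: "x \<in> \<Omega>" using elim spaceM by auto
    have sg: "p x * (u x - uz x) \<le> 0" using elim unfolding p_def by auto
    have ind0: "0 \<le> (indicator B x :: real)" by (simp add: indicator_def)
    show ?case
    proof (cases "x \<in> I")
      case True
      then have "uz x = max (ua x) (min (ub x) (s x))" using elim unfolding s_def projUad_def by auto
      then have "0 \<le> (u x - uz x) * (uz x - s x)" using elim by (intro proj_prop) auto
      moreover have "gm * ((u x - uz x) * p x) \<le> 0"
        using sg gm by (simp add: mult.commute mult_nonneg_nonpos)
      moreover have "0 \<le> G * Mb * indicator B x" using G Mb ind0 by simp
      ultimately show ?thesis by linarith
    next
      case False
      have pn: "p x \<noteq> 0" using False xO pz unfolding p_def by auto
      show ?thesis
      proof (rule pw_bound[OF sg _ _ gm G])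
        show "\<bar>u x - uz x\<bar> \<le> Mb" using elim by auto
        show "\<bar>uz x - s x\<bar> \<le> G" using elim unfolding s_def by auto
        show "indicator B x = 1" if "\<bar>p x\<bar> < G / gm"
          using that pn False xO unfolding B_def by (auto simp: indicator_def)
      qed (rule ind0)
    qed
  qed
  have "gm * l2inner \<Omega> (\<lambda>x. u x - uz x) p - l2inner \<Omega> (\<lambda>x. u x - uz x) (\<lambda>x. uz x - s x)
      = integral\<^sup>L M (\<lambda>x. gm * ((u x - uz x) * p x) - (u x - uz x) * (uz x - s x))"
    unfolding l2inner_def using eL pL gL by (simp add: L2_prod)
  also have "\<dots> \<le> integral\<^sup>L M (\<lambda>x. G * Mb * indicator B x)"
    by (rule integral_mono_AE[OF inth intB pw])
  also have "\<dots> = G * Mb * measure M B"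
    using BM by (simp add: Bochner_Integration.integral_indicator spaceM Int_absorb2 BO)
  also have "measure M B = measure lebesgue B"
    using measure_restrict_space[of \<Omega> lebesgue B] Omega_sets BO by simp
  also have "measure lebesgue B \<le> c * (G / gm) powr \<kappa>"
    using meas G gm unfolding B_def p_def by auto
  finally have le: "gm * l2inner \<Omega> (\<lambda>x. u x - uz x) p - l2inner \<Omega> (\<lambda>x. u x - uz x) (\<lambda>x. uz x - s x)
      \<le> G * Mb * (c * (G / gm) powr \<kappa>)"
    using G Mb by (simp add: mult_left_mono)
  have "(G / gm) powr \<kappa> = G powr \<kappa> * gm powr (-\<kappa>)"
    unfolding powr_divide by (simp add: powr_minus divide_inverse)
  then show ?thesis using le unfolding p_def s_def by (simp add: algebra_simps)
qed

end


definition svec :: "(('a \<Rightarrow> real) \<Rightarrow> 'y::real_normed_vector) \<Rightarrow> (nat \<Rightarrow> real) \<Rightarrow> (nat \<Rightarrow> 'a \<Rightarrow> real) \<Rightarrow> ('a \<Rightarrow> real) \<Rightarrow> nat \<Rightarrow> 'y" where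
  "svec S \<alpha> u uz j = (\<Sum>l=1..j. (1 / \<alpha> l) *\<^sub>R (S (u l) - S uz))"

lemma svec_Suc: "svec S \<alpha> u uz (Suc j) = svec S \<alpha> u uz j + (1 / \<alpha> (Suc j)) *\<^sub>R (S (u (Suc j)) - S uz)"
  unfolding svec_def by simp

lemma svec_0: "svec S \<alpha> u uz 0 = 0"
  unfolding svec_def by simp

lemma Lam_decomp:
  "Lam S \<alpha> \<zeta> u k = gam \<alpha> k *\<^sub>R (\<zeta> - z) + gam \<alpha> k *\<^sub>R (z - S uz) - svec S \<alpha> u uz k"
proof -
  have "Lam S \<alpha> \<zeta> u k = (\<Sum>l=1..k. (1 / \<alpha> l) *\<^sub>R (\<zeta> - z) + (1 / \<alpha> l) *\<^sub>R (z - S uz) - (1 / \<alpha> l) *\<^sub>R (S (u l) - S uz))"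
    unfolding Lam_def by (intro sum.cong refl) (simp add: algebra_simps)
  also have "\<dots> = gam \<alpha> k *\<^sub>R (\<zeta> - z) + gam \<alpha> k *\<^sub>R (z - S uz) - svec S \<alpha> u uz k"
    unfolding gam_def svec_def by (simp add: sum.distrib sum_subtractf scaleR_sum_left)
  finally show ?thesis .
qed

lemma tele_step:
  fixes a b w \<eta> :: "'y::real_inner"
  assumes eta: "norm \<eta> \<le> \<delta>"
  shows "inner (b - a) (g *\<^sub>R \<eta> - b - w)
     \<le> (1/2) * g\<^sup>2 * \<delta>\<^sup>2 + ((1/2) * (norm a)\<^sup>2 + inner w a) - ((1/2) * (norm b)\<^sup>2 + inner w b)"
proof -
  define d where "d = b - a"
  have b: "b = a + d" unfolding d_def by simp
  have "0 \<le> (norm (d - g *\<^sub>R \<eta>))\<^sup>2" by simp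
  also have "(norm (d - g *\<^sub>R \<eta>))\<^sup>2 = (norm d)\<^sup>2 - 2 * g * inner d \<eta> + g\<^sup>2 * (norm \<eta>)\<^sup>2"
    unfolding power2_norm_eq_inner
    by (simp add: inner_diff_left inner_diff_right inner_commute power2_eq_square algebra_simps)
  finally have h1: "g * inner d \<eta> \<le> (1/2) * (norm d)\<^sup>2 + (1/2) * g\<^sup>2 * (norm \<eta>)\<^sup>2" by simp
  have "(norm \<eta>)\<^sup>2 \<le> \<delta>\<^sup>2" using eta by (intro power_mono) auto
  then have h2: "g\<^sup>2 * (norm \<eta>)\<^sup>2 \<le> g\<^sup>2 * \<delta>\<^sup>2" by (intro mult_left_mono) auto
  have nb: "(norm b)\<^sup>2 = (norm a)\<^sup>2 + 2 * inner a d + (norm d)\<^sup>2"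
    unfolding b power2_norm_eq_inner by (simp add: inner_add_left inner_add_right inner_commute)
  have "inner (b - a) (g *\<^sub>R \<eta> - b - w) = g * inner d \<eta> - inner d a - (norm d)\<^sup>2 - inner d w"
    unfolding d_def[symmetric] unfolding b power2_norm_eq_inner
    by (simp add: inner_diff_right inner_add_right)
  also have "inner d w = inner w b - inner w a"
    unfolding b by (simp add: inner_add_right inner_commute)
  finally show ?thesis using h1 h2 nb by (simp add: inner_commute algebra_simps)
qed

lemma tele_sum:
  fixes s :: "nat \<Rightarrow> 'y::real_inner" and w \<eta> :: 'y
  assumes step: "\<And>i. i \<ge> 1 \<Longrightarrow> a i \<le> b i + inner (s i - s (i - 1)) (g i *\<^sub>R \<eta> - s i - w)"
    and s0: "s 0 = 0" and eta: "norm \<eta> \<le> \<delta>"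
  shows "(\<Sum>i=1..k. a i) \<le> (\<Sum>i=1..k. b i) + (1/2) * \<delta>\<^sup>2 * (\<Sum>i=1..k. (g i)\<^sup>2) + (1/2) * (norm w)\<^sup>2"
proof -
  define \<Phi> where "\<Phi> x = (1/2) * (norm x)\<^sup>2 + inner w x" for x
  have ind: "(\<Sum>i=1..k. a i) \<le> (\<Sum>i=1..k. b i) + (1/2) * \<delta>\<^sup>2 * (\<Sum>i=1..k. (g i)\<^sup>2) - \<Phi> (s k)" for k
  proof (induction k)
    case 0
    then show ?case by (simp add: \<Phi>_def s0)
  next
    case (Suc k)
    have "a (Suc k) \<le> b (Suc k) + inner (s (Suc k) - s k) (g (Suc k) *\<^sub>R \<eta> - s (Suc k) - w)"
      using step[of "Suc k"] by simp
    also have "inner (s (Suc k) - s k) (g (Suc k) *\<^sub>R \<eta> - s (Suc k) - w)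
        \<le> (1/2) * (g (Suc k))\<^sup>2 * \<delta>\<^sup>2 + \<Phi> (s k) - \<Phi> (s (Suc k))"
      unfolding \<Phi>_def using tele_step[OF eta] by simp
    finally show ?case using Suc.IH by (simp add: algebra_simps)
  qed
  have "0 \<le> (1/2) * (norm (s k + w))\<^sup>2" by simp
  also have "(norm (s k + w))\<^sup>2 = (norm (s k))\<^sup>2 + 2 * inner w (s k) + (norm w)\<^sup>2"
    unfolding power2_norm_eq_inner by (simp add: inner_add_left inner_add_right inner_commute)
  finally have "- \<Phi> (s k) \<le> (1/2) * (norm w)\<^sup>2" unfolding \<Phi>_def by simp
  then show ?thesis using ind[of k] by simp
qed

context sett
begin

lemma iter_ineq:
  assumes i1: "i \<ge> 1" and apos: "\<alpha> i > 0"
    and ui: "u i \<in> Uad \<Omega> ua ub" and uz: "uz \<in> Uad \<Omega> ua ub"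
    and vi: "inner (S (\<lambda>x. uz x - u i x)) (Lam S \<alpha> \<zeta> u i) \<le> l2inner \<Omega> (u i) (\<lambda>x. uz x - u i x)"
    and sb: "gam \<alpha> i * l2inner \<Omega> (\<lambda>x. u i x - uz x) (Sadj (z - S uz))
          - l2inner \<Omega> (\<lambda>x. u i x - uz x) (\<lambda>x. uz x - Sadj w x) \<le> K * gam \<alpha> i powr (-\<kappa>)"
  shows "(1 / \<alpha> i) * (l2norm \<Omega> (\<lambda>x. uz x - u i x))\<^sup>2
     \<le> K * ((1 / \<alpha> i) * gam \<alpha> i powr (-\<kappa>))
       + inner (svec S \<alpha> u uz i - svec S \<alpha> u uz (i - 1)) (gam \<alpha> i *\<^sub>R (\<zeta> - z) - svec S \<alpha> u uz i - w)"
proof -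
  define e where "e = (\<lambda>x. u i x - uz x)"
  define g where "g = (\<lambda>x. uz x - Sadj w x)"
  define gi where "gi = gam \<alpha> i"
  define si where "si = svec S \<alpha> u uz i"
  define sp where "sp = svec S \<alpha> u uz (i - 1)"
  have uiL: "u i \<in> L2 \<Omega>" and uzL: "uz \<in> L2 \<Omega>" using ui uz Uad_L2 by auto
  have eL: "e \<in> L2 \<Omega>" unfolding e_def using uiL uzL L2_diff by blast
  have sL: "Sadj w \<in> L2 \<Omega>" by (rule Sadj_L2)
  have gL: "g \<in> L2 \<Omega>" unfolding g_def using sL uzL L2_diff by blast
  have mL: "(\<lambda>x. uz x - u i x) \<in> L2 \<Omega>" using uiL uzL L2_diff by blast
  have Se: "S e = S (u i) - S uz" unfolding e_def using S_diff[OF uiL uzL] .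
  have Sm: "S (\<lambda>x. uz x - u i x) = - S e" unfolding Se using S_diff[OF uzL uiL] by simp
  have n: "(l2norm \<Omega> (\<lambda>x. uz x - u i x))\<^sup>2 = l2inner \<Omega> e e"
    unfolding l2norm_sq l2inner_def e_def by (simp add: algebra_simps)
  have ee: "l2inner \<Omega> e e = l2inner \<Omega> (u i) e - l2inner \<Omega> uz e"
    unfolding e_def[of] using l2inner_diff1[OF uiL uzL eL] unfolding e_def by simp
  have m1: "l2inner \<Omega> (u i) (\<lambda>x. uz x - u i x) = - l2inner \<Omega> (u i) e"
  proof -
    have "(\<lambda>x. u i x * (uz x - u i x)) = (\<lambda>x. - (u i x * (u i x - uz x)))"
      by (simp add: fun_eq_iff algebra_simps)
    then show ?thesis unfolding l2inner_def e_def by simp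
  qed
  have A: "l2inner \<Omega> (u i) e \<le> inner (S e) (Lam S \<alpha> \<zeta> u i)"
    using vi unfolding Sm m1 by simp
  have u0split: "uz = (\<lambda>x. Sadj w x + 1 * g x)" unfolding g_def by simp
  have B: "l2inner \<Omega> uz e = inner (S e) w + l2inner \<Omega> e g"
  proof -
    have "l2inner \<Omega> uz e = l2inner \<Omega> (\<lambda>x. Sadj w x + 1 * g x) e" using u0split by simp
    also have "\<dots> = l2inner \<Omega> (Sadj w) e + 1 * l2inner \<Omega> g e" by (rule l2inner_lin1[OF sL gL eL])
    also have "l2inner \<Omega> (Sadj w) e = inner (S e) w" using Sadj_adj[OF eL] l2inner_sym by metis
    finally show ?thesis using l2inner_sym by simp
  qed
  have C: "inner (S e) (Lam S \<alpha> \<zeta> u i) = gi * inner (S e) (\<zeta> - z) + gi * l2inner \<Omega> e (Sadj (z - S uz)) - inner (S e) si"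
    unfolding Lam_decomp[of S \<alpha> \<zeta> u i z uz] Sadj_adj[OF eL] gi_def si_def
    by (simp add: inner_diff_right inner_add_right)
  have sb': "gi * l2inner \<Omega> e (Sadj (z - S uz)) - l2inner \<Omega> e g \<le> K * gi powr (-\<kappa>)"
    using sb unfolding e_def g_def gi_def .
  have ie: "l2inner \<Omega> e e \<le> K * gi powr (-\<kappa>) + inner (S e) (gi *\<^sub>R (\<zeta> - z) - si - w)"
    using ee A B C sb' by (simp add: inner_diff_right)
  obtain m where im: "i = Suc m" using i1 by (cases i) auto
  have Sd: "S e = \<alpha> i *\<^sub>R (si - sp)"
    unfolding si_def sp_def im svec_Suc Se using apos im by simp
  have "(1 / \<alpha> i) * l2inner \<Omega> e e \<le> (1 / \<alpha> i) * (K * gi powr (-\<kappa>) + inner (S e) (gi *\<^sub>R (\<zeta> - z) - si - w))"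
    using ie apos by (intro mult_left_mono) auto
  also have "\<dots> = K * ((1 / \<alpha> i) * gi powr (-\<kappa>)) + inner (si - sp) (gi *\<^sub>R (\<zeta> - z) - si - w)"
    unfolding Sd using apos by (simp add: algebra_simps)
  finally show ?thesis unfolding n gi_def si_def sp_def .
qed

end


lemma gam_0: "gam \<alpha> 0 = 0" by (simp add: gam_def)

lemma gam_Suc: "gam \<alpha> (Suc k) = gam \<alpha> k + 1 / \<alpha> (Suc k)"
  by (simp add: gam_def)

lemma gam_mono:
  assumes apos: "\<And>k. k \<ge> 1 \<Longrightarrow> \<alpha> k > 0" and "j \<le> k"
  shows "gam \<alpha> j \<le> gam \<alpha> k"
  unfolding gam_def using assms by (intro sum_mono2) (auto intro: less_imp_le)

lemma gam_lower:
  assumes apos: "\<And>k. k \<ge> 1 \<Longrightarrow> \<alpha> k > 0" and C: "\<And>k. k \<ge> 1 \<Longrightarrow> \<alpha> k \<le> C" and C0: "C > 0"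
  shows "real k / C \<le> gam \<alpha> k"
proof -
  have "(\<Sum>j=1..k. 1 / C) \<le> gam \<alpha> k"
    unfolding gam_def using apos C C0 by (intro sum_mono) (auto intro!: divide_left_mono)
  then show ?thesis by simp
qed

lemma gam_pos:
  assumes apos: "\<And>k. k \<ge> 1 \<Longrightarrow> \<alpha> k > 0" and "k \<ge> 1"
  shows "gam \<alpha> k > 0"
proof -
  have "gam \<alpha> 1 \<le> gam \<alpha> k" by (rule gam_mono[of \<alpha>]) (use apos assms(2) in auto)
  moreover have "gam \<alpha> 1 = 1 / \<alpha> 1" by (simp add: gam_def)
  moreover have "0 < 1 / \<alpha> 1" using apos[of 1] by simp
  ultimately show ?thesis by linarith
qed

lemma gam_at_top:
  assumes apos: "\<And>k. k \<ge> 1 \<Longrightarrow> \<alpha> k > 0" and C: "\<And>k. k \<ge> 1 \<Longrightarrow> \<alpha> k \<le> C"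
  shows "filterlim (gam \<alpha>) at_top at_top"
proof -
  have C0: "C > 0" using apos[of 1] C[of 1] by simp
  show ?thesis unfolding filterlim_at_top
  proof
    fix Z :: real
    have "\<forall>\<^sub>F k in at_top. nat \<lceil>Z * C\<rceil> \<le> k" by (rule eventually_ge_at_top)
    then show "\<forall>\<^sub>F k in at_top. Z \<le> gam \<alpha> k"
    proof eventually_elim
      case (elim k)
      then have "Z * C \<le> real k" by linarith
      then have "Z \<le> real k / C" using C0 by (simp add: pos_le_divide_eq)
      also have "\<dots> \<le> gam \<alpha> k" by (rule gam_lower[where \<alpha>=\<alpha>, OF apos C C0])
      finally show ?case .
    qed
  qed
qed

lemma e_reg_ge1:
  assumes apos: "\<And>k. k \<ge> 1 \<Longrightarrow> \<alpha> k > 0"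
  shows "1 \<le> e_reg \<alpha> \<kappa> k"
  unfolding e_reg_def
proof (intro add_increasing2 sum_nonneg)
  fix i assume "i \<in> {1..k}"
  then have "\<alpha> i > 0" using apos by auto
  then show "0 \<le> 1 / \<alpha> i * gam \<alpha> i powr - \<kappa>" by simp
qed simp

lemma e_reg_ratio:
  assumes apos: "\<And>k. k \<ge> 1 \<Longrightarrow> \<alpha> k > 0" and C: "\<And>k. k \<ge> 1 \<Longrightarrow> \<alpha> k \<le> C"
    and kap: "\<kappa> > 0"
  shows "((\<lambda>k. e_reg \<alpha> \<kappa> k / gam \<alpha> k) \<longlongrightarrow> 0) at_top"
proof (rule tendstoI)
  fix \<epsilon> :: real assume e: "\<epsilon> > 0"
  have gt: "filterlim (gam \<alpha>) at_top at_top" by (rule gam_at_top[where \<alpha>=\<alpha>, OF apos C])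
  have "((\<lambda>k. gam \<alpha> k powr (-\<kappa>)) \<longlongrightarrow> 0) at_top"
    using kap by (intro tendsto_neg_powr gt) auto
  then have "\<forall>\<^sub>F k in at_top. gam \<alpha> k powr (-\<kappa>) < \<epsilon> / 2"
    using e by (intro order_tendstoD(2)) auto
  then obtain N where N: "\<And>k. k \<ge> N \<Longrightarrow> gam \<alpha> k powr (-\<kappa>) < \<epsilon> / 2"
    by (auto simp: eventually_at_top_linorder)
  define f where "f i = (1 / \<alpha> i) * gam \<alpha> i powr (-\<kappa>)" for i
  define A where "A = (\<Sum>i=1..N. f i)"
  have A0: "0 \<le> A" unfolding A_def
  proof (intro sum_nonneg)
    fix i assume "i \<in> {1..N}"
    then have "\<alpha> i > 0" using apos by auto
    then show "0 \<le> f i" unfolding f_def by simp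
  qed
  have bound: "e_reg \<alpha> \<kappa> k \<le> 1 + A + (\<epsilon> / 2) * gam \<alpha> k" if kN: "k \<ge> N" for k
  proof -
    have fi: "f i \<le> (\<epsilon> / 2) * (1 / \<alpha> i) + (if i \<le> N then f i else 0)" if "i \<in> {1..k}" for i
    proof (cases "i \<le> N")
      case True
      then show ?thesis using that apos[of i] e by simp
    next
      case False
      then have "gam \<alpha> i powr (-\<kappa>) \<le> \<epsilon> / 2" using N[of i] by simp
      then have "f i \<le> (1 / \<alpha> i) * (\<epsilon> / 2)" unfolding f_def using that apos[of i]
        by (intro mult_left_mono) auto
      then show ?thesis using False by (simp add: mult.commute)
    qed
    have "(\<Sum>i=1..k. f i) \<le> (\<Sum>i=1..k. (\<epsilon> / 2) * (1 / \<alpha> i) + (if i \<le> N then f i else 0))"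
      by (rule sum_mono) (rule fi)
    also have "\<dots> = (\<epsilon> / 2) * gam \<alpha> k + (\<Sum>i=1..k. if i \<le> N then f i else 0)"
      by (simp add: sum.distrib sum_distrib_left gam_def)
    also have "(\<Sum>i=1..k. if i \<le> N then f i else 0) = (\<Sum>i\<in>{i\<in>{1..k}. i \<le> N}. f i)"
      by (subst sum.inter_filter) auto
    also have "{i\<in>{1..k}. i \<le> N} = {1..N}" using kN by auto
    finally show ?thesis unfolding e_reg_def A_def f_def by simp
  qed
  have "((\<lambda>k. (1 + A) / gam \<alpha> k) \<longlongrightarrow> 0) at_top"
    by (rule tendsto_divide_0[OF tendsto_const]) (rule filterlim_at_top_imp_at_infinity[OF gt])
  then have ev1: "\<forall>\<^sub>F k in at_top. (1 + A) / gam \<alpha> k < \<epsilon> / 2"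
    using e by (intro order_tendstoD(2)) auto
  have ev2: "\<forall>\<^sub>F k in at_top. k \<ge> max N 1" by (rule eventually_ge_at_top)
  show "\<forall>\<^sub>F k in at_top. dist (e_reg \<alpha> \<kappa> k / gam \<alpha> k) 0 < \<epsilon>"
    using ev1 ev2
  proof eventually_elim
    case (elim k)
    have gp: "gam \<alpha> k > 0" using gam_pos[where \<alpha>=\<alpha>, OF apos] elim by auto
    have r1: "1 \<le> e_reg \<alpha> \<kappa> k" by (rule e_reg_ge1[where \<alpha>=\<alpha>, OF apos])
    have "e_reg \<alpha> \<kappa> k / gam \<alpha> k \<le> (1 + A + (\<epsilon> / 2) * gam \<alpha> k) / gam \<alpha> k"
      using bound[of k] elim gp by (intro divide_right_mono) auto
    also have "\<dots> = (1 + A) / gam \<alpha> k + \<epsilon> / 2" using gp by (simp add: field_simps)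
    finally have "e_reg \<alpha> \<kappa> k / gam \<alpha> k < \<epsilon>" using elim(1) by linarith
    moreover have "0 \<le> e_reg \<alpha> \<kappa> k / gam \<alpha> k" using gp r1 by simp
    ultimately show ?case by simp
  qed
qed

definition Xn :: "(nat \<Rightarrow> real) \<Rightarrow> nat \<Rightarrow> real" where
  "Xn \<alpha> k = (\<Sum>i=1..k. 1 / (\<alpha> i)\<^sup>2 + (gam \<alpha> (i - 1))\<^sup>2)"

lemma e_noise_Xn: "e_noise \<alpha> \<delta> k = \<delta>\<^sup>2 * Xn \<alpha> k"
  by (simp add: e_noise_def Xn_def)

lemma Xn_mono: "j \<le> k \<Longrightarrow> Xn \<alpha> j \<le> Xn \<alpha> k"
  unfolding Xn_def by (intro sum_mono2) auto

lemma kstop_bdd: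
  assumes apos: "\<And>k. k \<ge> 1 \<Longrightarrow> \<alpha> k > 0" and C: "\<And>k. k \<ge> 1 \<Longrightarrow> \<alpha> k \<le> C"
    and kap: "\<kappa> > 0" and tau: "\<tau> > 0" and d: "\<delta> > 0"
  shows "\<exists>b. \<forall>y. (\<forall>i\<in>{1..y}. e_noise \<alpha> \<delta> i \<le> \<tau> * e_reg \<alpha> \<kappa> i) \<longrightarrow> y \<le> b"
proof -
  define D where "D = gam \<alpha> 1 powr (-\<kappa>)"
  have D0: "0 \<le> D" unfolding D_def by simp
  define X where "X = 1 + 2 * \<tau> * (1 + D) / \<delta>\<^sup>2"
  have "\<forall>\<^sub>F k in at_top. X \<le> gam \<alpha> k"
    using gam_at_top[where \<alpha>=\<alpha>, OF apos C] by (simp add: filterlim_at_top)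
  moreover have "\<forall>\<^sub>F k in at_top. k \<ge> (1::nat)" by (rule eventually_ge_at_top)
  ultimately have "\<forall>\<^sub>F k in at_top. X \<le> gam \<alpha> k \<and> k \<ge> 1" by (rule eventually_conj)
  then obtain N where N: "X \<le> gam \<alpha> N" "N \<ge> 1" by (auto simp: eventually_at_top_linorder)
  define x where "x = gam \<alpha> N"
  have X1: "1 \<le> X" unfolding X_def using tau D0 d by simp
  have x1: "1 \<le> x" using N X1 unfolding x_def by simp
  have reg: "e_reg \<alpha> \<kappa> N \<le> 1 + D * x"
  proof -
    have "(\<Sum>i=1..N. (1 / \<alpha> i) * gam \<alpha> i powr (-\<kappa>)) \<le> (\<Sum>i=1..N. (1 / \<alpha> i) * D)"
    proof (rule sum_mono)
      fix i assume i: "i \<in> {1..N}"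
      have g1: "0 < gam \<alpha> 1" using gam_pos[where \<alpha>=\<alpha>, OF apos] by simp
      have "gam \<alpha> 1 \<le> gam \<alpha> i" by (rule gam_mono[of \<alpha>]) (use apos i in auto)
      then have "gam \<alpha> i powr (-\<kappa>) \<le> D" unfolding D_def using g1 kap
        by (intro powr_mono2') auto
      then show "(1 / \<alpha> i) * gam \<alpha> i powr (-\<kappa>) \<le> (1 / \<alpha> i) * D"
        using apos[of i] i by (intro mult_left_mono) auto
    qed
    also have "\<dots> = D * x" unfolding x_def gam_def sum_distrib_left by (simp add: mult.commute)
    finally show ?thesis unfolding e_reg_def by simp
  qed
  have noise: "\<delta>\<^sup>2 * x\<^sup>2 / 2 \<le> e_noise \<alpha> \<delta> N"
  proof -
    obtain m where Nm: "N = Suc m" using N by (cases N) auto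
    have "x = gam \<alpha> m + 1 / \<alpha> N" unfolding x_def Nm gam_Suc ..
    then have xe: "x\<^sup>2 = (gam \<alpha> m)\<^sup>2 + 2 * (gam \<alpha> m) * (1 / \<alpha> N) + (1 / \<alpha> N)\<^sup>2"
      by (simp add: power2_sum)
    have "0 \<le> (gam \<alpha> m - 1 / \<alpha> N)\<^sup>2" by simp
    then have "0 \<le> (gam \<alpha> m)\<^sup>2 - 2 * (gam \<alpha> m) * (1 / \<alpha> N) + (1 / \<alpha> N)\<^sup>2"
      by (simp add: power2_diff)
    moreover have "2 * ((gam \<alpha> m)\<^sup>2 + (1 / \<alpha> N)\<^sup>2) = 2 * (gam \<alpha> m)\<^sup>2 + 2 * (1 / \<alpha> N)\<^sup>2" by simp
    ultimately have "x\<^sup>2 \<le> 2 * ((gam \<alpha> m)\<^sup>2 + (1 / \<alpha> N)\<^sup>2)" using xe by linarith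
    moreover have "(gam \<alpha> m)\<^sup>2 + 1 / (\<alpha> N)\<^sup>2 \<le> Xn \<alpha> N"
      unfolding Xn_def Nm by (simp add: add_increasing2 sum_nonneg)
    ultimately have "x\<^sup>2 / 2 \<le> Xn \<alpha> N" by (simp add: power_one_over)
    then show ?thesis unfolding e_noise_Xn using d
      by (metis mult_left_mono zero_le_power2 times_divide_eq_right)
  qed
  have "\<tau> * (1 + D * x) \<le> \<tau> * (1 + D) * x"
    using tau D0 x1 by (simp add: algebra_simps mult_left_mono)
  also have "\<tau> * (1 + D) * x = \<delta>\<^sup>2 * x * ((2 * \<tau> * (1 + D) / \<delta>\<^sup>2)) / 2"
    using d by (simp add: field_simps)
  also have "\<dots> < \<delta>\<^sup>2 * x * X / 2"
    unfolding X_def using d x1 by (simp add: field_simps)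
  also have "\<dots> \<le> \<delta>\<^sup>2 * x * x / 2"
    using d x1 N unfolding x_def by (intro divide_right_mono mult_left_mono) auto
  also have "\<dots> \<le> e_noise \<alpha> \<delta> N" using noise by (simp add: power2_eq_square mult.assoc)
  finally have f1: "\<tau> * (1 + D * x) < e_noise \<alpha> \<delta> N" .
  have "\<tau> * e_reg \<alpha> \<kappa> N \<le> \<tau> * (1 + D * x)" using reg tau by (intro mult_left_mono) auto
  with f1 have fail: "\<tau> * e_reg \<alpha> \<kappa> N < e_noise \<alpha> \<delta> N" by linarith
  show ?thesis
  proof (intro exI allI impI)
    fix y assume P: "\<forall>i\<in>{1..y}. e_noise \<alpha> \<delta> i \<le> \<tau> * e_reg \<alpha> \<kappa> i"
    show "y \<le> N"
    proof (rule ccontr)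
      assume "\<not> y \<le> N"
      then have "N \<in> {1..y}" using N by auto
      then have "e_noise \<alpha> \<delta> N \<le> \<tau> * e_reg \<alpha> \<kappa> N" using P by blast
      then show False using fail by linarith
    qed
  qed
qed

lemma kstop_ge:
  assumes apos: "\<And>k. k \<ge> 1 \<Longrightarrow> \<alpha> k > 0" and C: "\<And>k. k \<ge> 1 \<Longrightarrow> \<alpha> k \<le> C"
    and kap: "\<kappa> > 0" and tau: "\<tau> > 0" and d: "\<delta> > 0"
    and N1: "N \<ge> 1" and small: "\<delta>\<^sup>2 * Xn \<alpha> N \<le> \<tau>"
  shows "N \<le> kstop \<alpha> \<kappa> \<tau> \<delta>"
proof -
  define P where "P y = (\<forall>i\<in>{1..y}. e_noise \<alpha> \<delta> i \<le> \<tau> * e_reg \<alpha> \<kappa> i)" for y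
  have PN: "P N" unfolding P_def
  proof
    fix i assume i: "i \<in> {1..N}"
    have "e_noise \<alpha> \<delta> i \<le> \<delta>\<^sup>2 * Xn \<alpha> N"
      unfolding e_noise_Xn using Xn_mono[of i N \<alpha>] i by (intro mult_left_mono) auto
    also have "\<dots> \<le> \<tau>" by (rule small)
    also have "\<tau> \<le> \<tau> * e_reg \<alpha> \<kappa> i" using e_reg_ge1[where \<alpha>=\<alpha>, OF apos] tau by simp
    finally show "e_noise \<alpha> \<delta> i \<le> \<tau> * e_reg \<alpha> \<kappa> i" .
  qed
  have "1 \<in> {1..N}" using N1 by simp
  then have "e_noise \<alpha> \<delta> 1 \<le> \<tau> * e_reg \<alpha> \<kappa> 1" using PN unfolding P_def by blast
  then have n1: "\<not> e_noise \<alpha> \<delta> 1 > \<tau> * e_reg \<alpha> \<kappa> 1" by simp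
  obtain b where b: "\<And>y. P y \<Longrightarrow> y \<le> b" using kstop_bdd[where \<alpha>=\<alpha>, OF apos C kap tau d] unfolding P_def by blast
  have "N \<le> Greatest P" by (rule Greatest_le_nat[of P N b]) (use PN b in auto)
  then show ?thesis unfolding kstop_def using n1 unfolding P_def by simp
qed

lemma kstop_at_top:
  assumes apos: "\<And>k. k \<ge> 1 \<Longrightarrow> \<alpha> k > 0" and C: "\<And>k. k \<ge> 1 \<Longrightarrow> \<alpha> k \<le> C"
    and kap: "\<kappa> > 0" and tau: "\<tau> > 0"
  shows "filterlim (kstop \<alpha> \<kappa> \<tau>) at_top (at_right 0)"
  unfolding filterlim_at_top
proof
  fix N0 :: nat
  define N where "N = max N0 1"
  have X0: "0 \<le> Xn \<alpha> N" unfolding Xn_def by (intro sum_nonneg) auto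
  define b where "b = min 1 (\<tau> / (Xn \<alpha> N + 1))"
  have b0: "b > 0" unfolding b_def using tau X0 by simp
  have "\<forall>\<^sub>F \<delta> in at_right 0. N \<le> kstop \<alpha> \<kappa> \<tau> \<delta>"
    unfolding eventually_at_right_field
  proof (intro exI conjI allI impI)
    show "0 < b" by (rule b0)
    fix \<delta> :: real assume d: "0 < \<delta>" "\<delta> < b"
    have "\<delta>\<^sup>2 \<le> \<delta>" using d unfolding b_def by (simp add: power2_eq_square mult_le_cancel_right1)
    also have "\<delta> \<le> \<tau> / (Xn \<alpha> N + 1)" using d unfolding b_def by simp
    finally have "\<delta>\<^sup>2 * (Xn \<alpha> N + 1) \<le> \<tau>" using X0 by (simp add: pos_le_divide_eq)
    moreover have "\<delta>\<^sup>2 * Xn \<alpha> N \<le> \<delta>\<^sup>2 * (Xn \<alpha> N + 1)" by (intro mult_left_mono) auto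
    ultimately have "\<delta>\<^sup>2 * Xn \<alpha> N \<le> \<tau>" by linarith
    moreover have N1: "N \<ge> 1" unfolding N_def by simp
    ultimately show "N \<le> kstop \<alpha> \<kappa> \<tau> \<delta>"
      using kstop_ge[where \<alpha>=\<alpha>, OF apos C kap tau d(1) N1] by blast
  qed
  then show "\<forall>\<^sub>F \<delta> in at_right 0. N0 \<le> kstop \<alpha> \<kappa> \<tau> \<delta>"
    by eventually_elim (simp add: N_def)
qed


theorem mainTheorem3:
  fixes \<Omega> :: "'a::euclidean_space set"
    and S :: "('a \<Rightarrow> real) \<Rightarrow> 'y::{real_inner, complete_space}"
    and Sadj :: "'y \<Rightarrow> 'a \<Rightarrow> real"
    and ua ub udag :: "'a \<Rightarrow> real"
    and z :: 'y
    and \<alpha> :: "nat \<Rightarrow> real"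
    and \<kappa> \<tau> :: real
    and zd :: "real \<Rightarrow> 'y"
    and ud :: "real \<Rightarrow> nat \<Rightarrow> 'a \<Rightarrow> real"
  assumes \<Omega>_meas: "\<Omega> \<in> sets lebesgue" and \<Omega>_bdd: "bounded \<Omega>"
    and S_add: "\<And>u v. u \<in> L2 \<Omega> \<Longrightarrow> v \<in> L2 \<Omega> \<Longrightarrow> S (\<lambda>x. u x + v x) = S u + S v"
    and S_scale: "\<And>c u. u \<in> L2 \<Omega> \<Longrightarrow> S (\<lambda>x. c * u x) = c *\<^sub>R S u"
    and S_bdd: "\<exists>C. \<forall>u \<in> L2 \<Omega>. norm (S u) \<le> C * l2norm \<Omega> u"
    and Sadj_L2: "\<And>w. Sadj w \<in> L2 \<Omega>"
    and Sadj_adj: "\<And>w u. u \<in> L2 \<Omega> \<Longrightarrow> l2inner \<Omega> u (Sadj w) = inner (S u) w"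
    and ua_inf: "ua \<in> Linf \<Omega>" and ub_inf: "ub \<in> Linf \<Omega>"
    and Uad_ne: "Uad \<Omega> ua ub \<noteq> {}"
    and \<alpha>_pos: "\<And>k. k \<ge> 1 \<Longrightarrow> \<alpha> k > 0"
    and \<alpha>_bdd: "\<exists>C. \<forall>k\<ge>1. \<alpha> k \<le> C"
    and udag_sol: "udag \<in> Uad \<Omega> ua ub"
      "\<And>v. v \<in> Uad \<Omega> ua ub \<Longrightarrow> (1/2) * (norm (S udag - z))\<^sup>2 \<le> (1/2) * (norm (S v - z))\<^sup>2"
    and \<kappa>_pos: "\<kappa> > 0"
    and ASC: "active_set_condition \<Omega> S Sadj ua ub z udag \<kappa>"
    and \<tau>_pos: "\<tau> > 0"
    and zd_close: "\<And>\<delta>. \<delta> > 0 \<Longrightarrow> norm (z - zd \<delta>) \<le> \<delta>"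
    and ud_breg: "\<And>\<delta>. \<delta> > 0 \<Longrightarrow> bregman_seq \<Omega> S Sadj ua ub \<alpha> (zd \<delta>) (ud \<delta>)"
  shows "((\<lambda>\<delta>. Min ((\<lambda>j. l2norm \<Omega> (\<lambda>x. udag x - ud \<delta> j x)) ` {1..kstop \<alpha> \<kappa> \<tau> \<delta>}))
           \<longlongrightarrow> 0) (at_right 0)"
proof -
  have \<Omega>lm: "\<Omega> \<in> lmeasurable" using \<Omega>_bdd \<Omega>_meas by (rule bounded_set_imp_lmeasurable)
  interpret sett \<Omega> S Sadj
    using \<Omega>lm S_add S_scale Sadj_L2 Sadj_adj by unfold_locales auto
  obtain I w c where I: "I \<in> sets lebesgue" "c > 0"
      "{x \<in> \<Omega>. Sadj (z - S udag) x = 0} \<subseteq> I"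
      "AE x in lebesgue_on \<Omega>. x \<in> I \<longrightarrow> udag x = projUad ua ub (Sadj w) x"
      "\<forall>\<epsilon>>0. measure lebesgue {x \<in> \<Omega> - I. 0 < \<bar>Sadj (z - S udag) x\<bar> \<and> \<bar>Sadj (z - S udag) x\<bar> < \<epsilon>} \<le> c * \<epsilon> powr \<kappa>"
      "Sadj w \<in> Linf \<Omega>"
    using ASC unfolding active_set_condition_def Let_def by blast
  obtain Ca where Ca: "AE x in M. \<bar>ua x\<bar> \<le> Ca" using ua_inf unfolding Linf_def by blast
  obtain Cb where Cb: "AE x in M. \<bar>ub x\<bar> \<le> Cb" using ub_inf unfolding Linf_def by blast
  obtain Cs where Cs: "AE x in M. \<bar>Sadj w x\<bar> \<le> Cs" using I(6) unfolding Linf_def by blast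
  obtain C where C: "\<And>k. k \<ge> 1 \<Longrightarrow> \<alpha> k \<le> C" using \<alpha>_bdd by blast
  define G where "G = \<bar>Ca\<bar> + \<bar>Cb\<bar> + \<bar>Cs\<bar> + 1"
  define Mb where "Mb = 2 * (\<bar>Ca\<bar> + \<bar>Cb\<bar>)"
  define K where "K = G * Mb * (c * G powr \<kappa>)"
  have G0: "G > 0" unfolding G_def by simp
  have Mb0: "Mb \<ge> 0" unfolding Mb_def by simp
  have K0: "K \<ge> 0" unfolding K_def using G0 Mb0 I(2) by simp
  have opt: "\<And>v. v \<in> Uad \<Omega> ua ub \<Longrightarrow> inner (S (\<lambda>x. v x - udag x)) (z - S udag) \<le> 0"
    by (rule opt_vi[OF udag_sol(1) udag_sol(2)]) auto
  have sgn: "\<And>u. u \<in> Uad \<Omega> ua ub \<Longrightarrow> AE x in M. Sadj (z - S udag) x * (u x - udag x) \<le> 0"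
    by (rule sign_pw[OF udag_sol(1) opt ua_inf ub_inf]) auto
  have r0: "AE x in M. ua x \<le> udag x \<and> udag x \<le> ub x" using udag_sol(1) by (simp add: Uad_def)
  have udL: "udag \<in> L2 \<Omega>" using udag_sol(1) by (simp add: Uad_def)
  have Qb: "(\<Sum>i=1..k. (1 / \<alpha> i) * (l2norm \<Omega> (\<lambda>x. udag x - ud \<delta> i x))\<^sup>2)
      \<le> K * (e_reg \<alpha> \<kappa> k - 1) + e_noise \<alpha> \<delta> k + (1/2) * (norm w)\<^sup>2" if d: "\<delta> > 0" for \<delta> k
  proof -
    define u where "u = ud \<delta>"
    define \<zeta> where "\<zeta> = zd \<delta>"
    have bs: "bregman_seq \<Omega> S Sadj ua ub \<alpha> \<zeta> u" unfolding u_def \<zeta>_def using ud_breg[OF d] .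
    have uU: "\<And>i. i \<ge> 1 \<Longrightarrow> u i \<in> Uad \<Omega> ua ub" using bs unfolding bregman_seq_def by blast
    have umin: "\<And>i. i \<ge> 1 \<Longrightarrow> \<forall>v\<in>Uad \<Omega> ua ub. breg_obj \<Omega> S Sadj \<alpha> \<zeta> u i (u i) \<le> breg_obj \<Omega> S Sadj \<alpha> \<zeta> u i v"
      using bs unfolding bregman_seq_def by blast
    have step: "(1 / \<alpha> i) * (l2norm \<Omega> (\<lambda>x. udag x - u i x))\<^sup>2
        \<le> K * ((1 / \<alpha> i) * gam \<alpha> i powr (-\<kappa>))
          + inner (svec S \<alpha> u udag i - svec S \<alpha> u udag (i - 1)) (gam \<alpha> i *\<^sub>R (\<zeta> - z) - svec S \<alpha> u udag i - w)"
      if i1: "i \<ge> 1" for i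
    proof (rule iter_ineq[where i=i and \<alpha>=\<alpha> and u=u and uz=udag and \<zeta>=\<zeta> and z=z and w=w and K=K and \<kappa>=\<kappa> and ua=ua and ub=ub, OF i1 \<alpha>_pos[OF i1] uU[OF i1] udag_sol(1)])
      show "inner (S (\<lambda>x. udag x - u i x)) (Lam S \<alpha> \<zeta> u i) \<le> l2inner \<Omega> (u i) (\<lambda>x. udag x - u i x)"
      proof (rule breg_vi[where k=i and \<alpha>=\<alpha> and u=u and \<zeta>=\<zeta> and ua=ua and ub=ub and v=udag, OF i1 \<alpha>_pos[OF i1] uU[OF i1] umin[OF i1] _ udag_sol(1)])
        assume "2 \<le> i"
        then have "i - 1 \<ge> 1" by simp
        then have "u (i - 1) \<in> Uad \<Omega> ua ub" by (rule uU)
        then show "u (i - 1) \<in> L2 \<Omega>" by (rule Uad_L2)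
      qed
      have uiL: "u i \<in> L2 \<Omega>" using uU[OF i1] Uad_L2 by auto
      have ri: "AE x in M. ua x \<le> u i x \<and> u i x \<le> ub x" using uU[OF i1] by (simp add: Uad_def)
      have rng: "AE x in M. ua x \<le> u i x \<and> u i x \<le> ub x \<and> ua x \<le> udag x \<and> udag x \<le> ub x"
        using ri r0 by eventually_elim auto
      have eb: "AE x in M. \<bar>u i x - udag x\<bar> \<le> Mb"
        using rng Ca Cb by eventually_elim (auto simp: Mb_def abs_le_iff)
      have gb: "AE x in M. \<bar>udag x - Sadj w x\<bar> \<le> G"
        using r0 Ca Cb Cs by eventually_elim (auto simp: G_def abs_le_iff)
      have gp: "gam \<alpha> i > 0" using gam_pos[where \<alpha>=\<alpha>, OF \<alpha>_pos i1] .
      show "gam \<alpha> i * l2inner \<Omega> (\<lambda>x. u i x - udag x) (Sadj (z - S udag))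
          - l2inner \<Omega> (\<lambda>x. u i x - udag x) (\<lambda>x. udag x - Sadj w x) \<le> K * gam \<alpha> i powr (-\<kappa>)"
        unfolding K_def
        by (rule step_int_bound[where uz=udag and u="u i" and P="z - S udag" and I=I and w=w and c=c and \<kappa>=\<kappa> and ua=ua and ub=ub and Mb=Mb and G=G and gm="gam \<alpha> i", OF udL uiL sgn[OF uU[OF i1]] I(1) I(3) I(4) I(5) rng eb gb G0 Mb0 gp])
    qed
    have eta: "norm (\<zeta> - z) \<le> \<delta>" unfolding \<zeta>_def using zd_close[OF d] by (simp add: norm_minus_commute)
    have ts: "(\<Sum>i=1..k. (1 / \<alpha> i) * (l2norm \<Omega> (\<lambda>x. udag x - u i x))\<^sup>2)
        \<le> (\<Sum>i=1..k. K * ((1 / \<alpha> i) * gam \<alpha> i powr (-\<kappa>))) + (1/2) * \<delta>\<^sup>2 * (\<Sum>i=1..k. (gam \<alpha> i)\<^sup>2)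
          + (1/2) * (norm w)\<^sup>2"
      by (rule tele_sum[where s="svec S \<alpha> u udag" and g="gam \<alpha>", OF step svec_0 eta])
    have s1: "(\<Sum>i=1..k. K * ((1 / \<alpha> i) * gam \<alpha> i powr (-\<kappa>))) = K * (e_reg \<alpha> \<kappa> k - 1)"
      unfolding e_reg_def by (simp add: sum_distrib_left)
    have s2: "(1/2) * \<delta>\<^sup>2 * (\<Sum>i=1..k. (gam \<alpha> i)\<^sup>2) \<le> e_noise \<alpha> \<delta> k"
    proof -
      have "(\<Sum>i=1..k. (1/2) * (gam \<alpha> i)\<^sup>2) \<le> (\<Sum>i=1..k. 1 / (\<alpha> i)\<^sup>2 + (gam \<alpha> (i - 1))\<^sup>2)"
      proof (rule sum_mono)
        fix i assume "i \<in> {1..k}"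
        then obtain m where im: "i = Suc m" by (cases i) auto
        define a where "a = gam \<alpha> m"
        define b where "b = 1 / \<alpha> i"
        have xe: "(gam \<alpha> i)\<^sup>2 = a\<^sup>2 + 2 * a * b + b\<^sup>2" unfolding a_def b_def im gam_Suc by (simp add: power2_sum)
        have "0 \<le> (a - b)\<^sup>2" by simp
        then have "0 \<le> a\<^sup>2 - 2 * a * b + b\<^sup>2" by (simp add: power2_diff)
        then have "(1/2) * (gam \<alpha> i)\<^sup>2 \<le> b\<^sup>2 + a\<^sup>2" using xe by linarith
        then show "(1/2) * (gam \<alpha> i)\<^sup>2 \<le> 1 / (\<alpha> i)\<^sup>2 + (gam \<alpha> (i - 1))\<^sup>2"
          unfolding a_def b_def im by (simp add: power_one_over)
      qed
      then have "\<delta>\<^sup>2 * (\<Sum>i=1..k. (1/2) * (gam \<alpha> i)\<^sup>2) \<le> \<delta>\<^sup>2 * (\<Sum>i=1..k. 1 / (\<alpha> i)\<^sup>2 + (gam \<alpha> (i - 1))\<^sup>2)"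
        by (intro mult_left_mono) auto
      then show ?thesis unfolding e_noise_def by (simp add: sum_distrib_left mult.assoc)
    qed
    show ?thesis using ts s1 s2 unfolding u_def by linarith
  qed
  define R where "R k = e_reg \<alpha> \<kappa> k / gam \<alpha> k" for k
  define C0 where "C0 = K + \<tau> + (1/2) * (norm w)\<^sup>2"
  define m where "m \<delta> = Min ((\<lambda>j. l2norm \<Omega> (\<lambda>x. udag x - ud \<delta> j x)) ` {1..kstop \<alpha> \<kappa> \<tau> \<delta>})" for \<delta>
  have ks: "filterlim (kstop \<alpha> \<kappa> \<tau>) at_top (at_right 0)"
    by (rule kstop_at_top[where \<alpha>=\<alpha>, OF \<alpha>_pos C \<kappa>_pos \<tau>_pos])
  have Rlim: "(R \<longlongrightarrow> 0) at_top" unfolding R_def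
    by (rule e_reg_ratio[where \<alpha>=\<alpha>, OF \<alpha>_pos C \<kappa>_pos])
  have RK: "((\<lambda>\<delta>. R (kstop \<alpha> \<kappa> \<tau> \<delta>)) \<longlongrightarrow> 0) (at_right 0)"
    by (rule filterlim_compose[OF Rlim ks])
  have bl: "((\<lambda>\<delta>. sqrt (C0 * R (kstop \<alpha> \<kappa> \<tau> \<delta>))) \<longlongrightarrow> 0) (at_right 0)"
    using tendsto_real_sqrt[OF tendsto_mult_right_zero[OF RK, of C0]] by simp
  have ev1: "\<forall>\<^sub>F \<delta> in at_right 0. 1 \<le> kstop \<alpha> \<kappa> \<tau> \<delta>"
    using ks by (simp add: filterlim_at_top)
  have ev2: "\<forall>\<^sub>F \<delta> in at_right (0::real). 0 < \<delta>" by (simp add: eventually_at_right_less)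
  have main: "\<forall>\<^sub>F \<delta> in at_right 0. 0 \<le> m \<delta> \<and> m \<delta> \<le> sqrt (C0 * R (kstop \<alpha> \<kappa> \<tau> \<delta>))"
    using ev1 ev2
  proof eventually_elim
    case (elim \<delta>)
    define k where "k = kstop \<alpha> \<kappa> \<tau> \<delta>"
    have k1: "k \<ge> 1" using elim unfolding k_def by simp
    define f where "f j = l2norm \<Omega> (\<lambda>x. udag x - ud \<delta> j x)" for j
    have md: "m \<delta> = Min (f ` {1..k})" unfolding m_def f_def k_def ..
    have fin: "finite (f ` {1..k})" "f ` {1..k} \<noteq> {}" using k1 by auto
    have f0: "\<And>j. 0 \<le> f j" unfolding f_def l2norm_def using l2inner_nonneg by simp
    have m0: "0 \<le> m \<delta>" unfolding md using Min_in[OF fin] f0 by auto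
    have mle: "\<And>j. j \<in> {1..k} \<Longrightarrow> m \<delta> \<le> f j" unfolding md using fin by (intro Min_le) auto
    define P where "P y = (\<forall>i\<in>{1..y}. e_noise \<alpha> \<delta> i \<le> \<tau> * e_reg \<alpha> \<kappa> i)" for y
    obtain b where b: "\<And>y. P y \<Longrightarrow> y \<le> b"
      using kstop_bdd[where \<alpha>=\<alpha>, OF \<alpha>_pos C \<kappa>_pos \<tau>_pos elim(2)] unfolding P_def by blast
    have P0: "P 0" unfolding P_def by simp
    have kG: "k = Greatest P"
    proof (cases "e_noise \<alpha> \<delta> 1 > \<tau> * e_reg \<alpha> \<kappa> 1")
      case True
      then have "k = 0" unfolding k_def kstop_def by simp
      then show ?thesis using k1 by simp
    next
      case False
      then show ?thesis unfolding k_def kstop_def P_def by simp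
    qed
    have Pk: "P k" unfolding kG by (rule GreatestI_nat[of P 0 b]) (use P0 b in auto)
    have nk: "e_noise \<alpha> \<delta> k \<le> \<tau> * e_reg \<alpha> \<kappa> k" using Pk k1 unfolding P_def by auto
    have r1: "1 \<le> e_reg \<alpha> \<kappa> k" by (rule e_reg_ge1[where \<alpha>=\<alpha>, OF \<alpha>_pos])
    have gp: "gam \<alpha> k > 0" using gam_pos[where \<alpha>=\<alpha>, OF \<alpha>_pos k1] .
    have "gam \<alpha> k * (m \<delta>)\<^sup>2 = (\<Sum>i=1..k. (1 / \<alpha> i) * (m \<delta>)\<^sup>2)"
      unfolding gam_def by (simp add: sum_distrib_right)
    also have "\<dots> \<le> (\<Sum>i=1..k. (1 / \<alpha> i) * (f i)\<^sup>2)"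
    proof (rule sum_mono)
      fix i assume i: "i \<in> {1..k}"
      have "(m \<delta>)\<^sup>2 \<le> (f i)\<^sup>2" using m0 mle[OF i] by (intro power_mono) auto
      moreover have "0 \<le> 1 / \<alpha> i" using \<alpha>_pos[of i] i by simp
      ultimately show "(1 / \<alpha> i) * (m \<delta>)\<^sup>2 \<le> (1 / \<alpha> i) * (f i)\<^sup>2" by (rule mult_left_mono)
    qed
    also have "\<dots> \<le> K * (e_reg \<alpha> \<kappa> k - 1) + e_noise \<alpha> \<delta> k + (1/2) * (norm w)\<^sup>2"
      unfolding f_def by (rule Qb[OF elim(2)])
    also have "\<dots> \<le> C0 * e_reg \<alpha> \<kappa> k"
    proof -
      have "(1/2) * (norm w)\<^sup>2 * 1 \<le> (1/2) * (norm w)\<^sup>2 * e_reg \<alpha> \<kappa> k"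
        using r1 by (intro mult_left_mono) auto
      then show ?thesis unfolding C0_def using nk K0 by (simp add: algebra_simps)
    qed
    finally have "(m \<delta>)\<^sup>2 \<le> C0 * R k" unfolding R_def using gp
      by (simp add: pos_le_divide_eq mult.commute mult.left_commute)
    then have "sqrt ((m \<delta>)\<^sup>2) \<le> sqrt (C0 * R k)" by (rule real_sqrt_le_mono)
    then have "m \<delta> \<le> sqrt (C0 * R k)" using m0 by simp
    then show ?case using m0 unfolding k_def by simp
  qed
  have "(m \<longlongrightarrow> 0) (at_right 0)"
  proof (rule tendsto_sandwich[OF _ _ tendsto_const bl])
    show "\<forall>\<^sub>F \<delta> in at_right 0. 0 \<le> m \<delta>" using main by eventually_elim auto
    show "\<forall>\<^sub>F \<delta> in at_right 0. m \<delta> \<le> sqrt (C0 * R (kstop \<alpha> \<kappa> \<tau> \<delta>))" using main by eventually_elim auto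
  qed
  then show ?thesis unfolding m_def .
qed

end
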